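(* Let $\mu$ be the segment process on $Y$ with density $p(x)=c_\nu^{-1}\exp(\nu_1L(U_x)+\nu_2N(U_x))$ with respect to $P_\eta$, where $\nu_1\in\mathbb R$ and $\nu_2\le0$. Then $$\mathbb EL(U_\mu)=\int_Y\mathbb E[\mathcal E_\mu(y)]\,l(y)\,\lambda(dy),\qquad \mathbb EN(U_\mu)=\tfrac12\int_{Y^2}\mathbb E[\mathcal E_\mu(y_1,y_2)]1_{[y_1\cap y_2\neq\emptyset]}\lambda(d(y_1,y_2)),$$ $$\mathbb E[L(U_\mu)^2]=\int_Y\mathbb E[\mathcal E_\mu(y)]l(y)^2\lambda(dy)+\int_{Y^2}\mathbb E[\mathcal E_\mu(y_1,y_2)]l(y_1)l(y_2)\lambda(d(y_1,y_2)),$$ $$\mathbb E[N(U_\mu)^2]=\tfrac12\int_{Y^2}\mathbb E[\mathcal E_\mu(y_1,y_2)]1_{[y_1\cap y_2\neq\emptyset]}\lambda(d(y_1,y_2))+\int_{Y^3}\mathbb E[\mathcal E_\mu(y_1,y_2,y_3)]1_{[y_1\cap y_2\neq\emptyset]}1_{[y_3\cap y_1\neq\emptyset]}\lambda(d(y_1,y_2,y_3))$$ $$+\tfrac14\int_{Y^4}\mathbb E[\mathcal E_\mu(y_1,\dots,y_4)]1_{[y_1\cap y_2\neq\emptyset]}1_{[y_3\cap y_4\neq\emptyset]}\lambda(d(y_1,\dots,y_4)).$$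
   Context: $B\subset\mathbb R^2$ is a bounded Borel set with positive area, $b>0$, $Y=B\times(0,b]\times[0,\pi)$; $y=(z,r,\phi)\in Y$ represents the closed line segment in $\mathbb R^2$ with centre $z$, length $r$ and axial orientation angle $\phi$; $l(y)=r$ is its length. $\eta$ is a Poisson process on $Y$ with intensity measure $\lambda(d(z,r,\phi))=\rho(z)\,dz\,Q(dr)\,V(d\phi)$, $\rho$ a bounded nonnegative function on $B$, $Q,V$ probability measures on $(0,b]$ and $[0,\pi)$, $V$ nondegenerate; $\lambda(d(y_1,\dots,y_n))$ denotes $\lambda^n$. For a finite configuration $x$ of segments, $L(U_x)=\sum_{s\in x}l(s)$ and $N(U_x)=\frac12\sum_{(s,t)\in x^2_{\neq}}1_{[s\cap t\neq\emptyset]}$ ($x^2_{\neq}$ = ordered pairs of distinct segments of $x$); $G(U_x)=(L(U_x),N(U_x))$, $\nu=(\nu_1,\nu_2)$, $c_\nu$ the normalizing constant. For $y,y_i\notin x$: $D_yG(U_x)=(l(y),\sum_{s\in x}1_{[s\cap y\neq\emptyset]})$, $D^2_{y_1y_2}G(U_x)=(0,1_{[y_1\cap y_2\neq\emptyset]})$. $\mathcal E_x(y_1,\dots,y_m)=\exp(\nu\cdot Q_m)$ with $Q_m=\sum_{i=1}^mD_{y_i}G(U_x)+\sum_{1\le i<j\le m}D^2_{y_iy_j}G(U_x)$, and $\mathcal E_\mu$ is this with $x=\mu$ (it equals the conditional intensity $p(\mu\cup\{y_1,\dots,y_m\})/p(\mu)$ a.s.). *)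

theory Defs
  imports "HOL-Probability.Probability"
begin

type_synonym segment = "(real \<times> real) \<times> real \<times> real"
  \<comment> \<open>(z, r, phi): centre z, length r, orientation angle phi\<close>

definition seg :: "segment \<Rightarrow> (real \<times> real) set" where
  "seg y = (case y of (z, r, \<phi>) \<Rightarrow>
     closed_segment (z - (r/2) *\<^sub>R (cos \<phi>, sin \<phi>)) (z + (r/2) *\<^sub>R (cos \<phi>, sin \<phi>)))"

definition len :: "segment \<Rightarrow> real" where
  "len y = fst (snd y)"

definition ind :: "segment \<Rightarrow> segment \<Rightarrow> real" where
  "ind y1 y2 = (if seg y1 \<inter> seg y2 \<noteq> {} then 1 else 0)"

definition segY :: "(real \<times> real) set \<Rightarrow> real \<Rightarrow> segment set" where
  "segY B b = B \<times> {0<..b} \<times> {0..<pi}"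

definition intensity :: "(real \<times> real) set \<Rightarrow> real \<Rightarrow> (real \<times> real \<Rightarrow> real)
    \<Rightarrow> real measure \<Rightarrow> real measure \<Rightarrow> segment measure" where
  "intensity B b \<rho> Q V =
     density (lborel \<Otimes>\<^sub>M (Q \<Otimes>\<^sub>M V)) (\<lambda>y. indicator (segY B b) y * ennreal (\<rho> (fst y)))"

text \<open>A finite configuration is represented by (n, xs): the segments xs 0, ..., xs (n-1).\<close>
definition Lc :: "nat \<Rightarrow> (nat \<Rightarrow> segment) \<Rightarrow> real" where
  "Lc n xs = (\<Sum>i<n. len (xs i))"

definition Nc :: "nat \<Rightarrow> (nat \<Rightarrow> segment) \<Rightarrow> real" where
  "Nc n xs = 1/2 * (\<Sum>i<n. \<Sum>j<n. if i \<noteq> j then ind (xs i) (xs j) else 0)"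

definition Gexp :: "real \<Rightarrow> real \<Rightarrow> nat \<Rightarrow> (nat \<Rightarrow> segment) \<Rightarrow> real" where
  "Gexp \<nu>1 \<nu>2 n xs = exp (\<nu>1 * Lc n xs + \<nu>2 * Nc n xs)"

text \<open>Expectation of F(eta) for the Poisson process eta with finite intensity measure lam:
  E F(eta) = exp(-lam(Y)) * sum_n 1/n! * int_{Y^n} F(y_1..y_n) lam^n(dy).\<close>
definition poisson_expect :: "segment measure \<Rightarrow> (nat \<Rightarrow> (nat \<Rightarrow> segment) \<Rightarrow> real) \<Rightarrow> real" where
  "poisson_expect lam F = exp (- measure lam (space lam)) *
     (\<Sum>k. (1 / fact k) * (\<integral>xs. F k xs \<partial>(PiM {..<k} (\<lambda>_. lam))))"

text \<open>Expectation for the Gibbs segment process mu with density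
  p = c^{-1} exp(nu1 L + nu2 N) w.r.t. the law of eta, c = E exp(nu1 L(eta) + nu2 N(eta)).\<close>
definition gibbs_expect :: "segment measure \<Rightarrow> real \<Rightarrow> real \<Rightarrow> (nat \<Rightarrow> (nat \<Rightarrow> segment) \<Rightarrow> real) \<Rightarrow> real" where
  "gibbs_expect lam \<nu>1 \<nu>2 F =
     poisson_expect lam (\<lambda>n xs. F n xs * Gexp \<nu>1 \<nu>2 n xs) / poisson_expect lam (Gexp \<nu>1 \<nu>2)"

definition calE :: "real \<Rightarrow> real \<Rightarrow> nat \<Rightarrow> (nat \<Rightarrow> segment) \<Rightarrow> nat \<Rightarrow> (nat \<Rightarrow> segment) \<Rightarrow> real" where
  "calE \<nu>1 \<nu>2 n xs m ys = exp (\<nu>1 * (\<Sum>i<m. len (ys i)) +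
     \<nu>2 * ((\<Sum>i<m. \<Sum>s<n. ind (xs s) (ys i)) +
           (\<Sum>i<m. \<Sum>j<m. if i < j then ind (ys i) (ys j) else 0)))"

end

theory Submission
  imports Defs
begin

definition segA :: "segment \<Rightarrow> real \<times> real" where
  "segA y = fst y - (fst (snd y)/2) *\<^sub>R (cos (snd (snd y)), sin (snd (snd y)))"
definition segC :: "segment \<Rightarrow> real \<times> real" where
  "segC y = fst y + (fst (snd y)/2) *\<^sub>R (cos (snd (snd y)), sin (snd (snd y)))"

lemma seg_alt: "seg y = closed_segment (segA y) (segC y)"
  by (simp add: seg_def segA_def segC_def split: prod.split)

lemma cont_segA: "continuous_on UNIV segA" unfolding segA_def
  by (intro continuous_intros) auto
lemma cont_segC: "continuous_on UNIV segC" unfolding segC_def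
  by (intro continuous_intros) auto

definition ISet :: "(segment \<times> segment) set" where
  "ISet = {p. seg (fst p) \<inter> seg (snd p) \<noteq> {}}"

lemma ISet_alt: "ISet = {p. \<exists>st. st \<in> cbox ((0::real),(0::real)) (1,1) \<and> (st, p) \<in>
   {q. (1 - fst (fst q)) *\<^sub>R segA (fst (snd q)) + fst (fst q) *\<^sub>R segC (fst (snd q)) =
       (1 - snd (fst q)) *\<^sub>R segA (snd (snd q)) + snd (fst q) *\<^sub>R segC (snd (snd q))}}"
proof -
  have c: "st \<in> cbox ((0::real),(0::real)) (1,1) \<longleftrightarrow> 0 \<le> fst st \<and> fst st \<le> 1 \<and> 0 \<le> snd st \<and> snd st \<le> 1" for st
    by (cases st) (auto simp: cbox_Pair_iff cbox_interval)
  show ?thesis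
    unfolding ISet_def seg_alt closed_segment_def c
    by auto metis
qed

lemma closed_ISet: "closed ISet"
  unfolding ISet_alt
  apply (rule closed_compact_projection)
   apply (rule compact_cbox)
  apply (rule closed_Collect_eq)
   apply (intro continuous_intros continuous_on_compose2[OF cont_segA] continuous_on_compose2[OF cont_segC]; simp)+
  done

definition Inj :: "nat \<Rightarrow> nat \<Rightarrow> (nat \<Rightarrow> nat) set" where
  "Inj m n = {\<sigma> \<in> {..<m} \<rightarrow>\<^sub>E {..<n}. inj_on \<sigma> {..<m}}"

lemma finite_Inj: "finite (Inj m n)"
  unfolding Inj_def by (rule finite_subset[OF _ finite_PiE[of "{..<m}" "\<lambda>_. {..<n}"]]) auto

lemma Inj_0: "Inj 0 n = {\<lambda>_. undefined}"
  unfolding Inj_def by auto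

lemma Inj_Suc_bij: "bij_betw (\<lambda>(\<sigma>, i). \<sigma>(m := i)) (SIGMA \<sigma>:Inj m n. {..<n} - \<sigma> ` {..<m}) (Inj (Suc m) n)"
proof (rule bij_betw_byWitness[where f'="\<lambda>\<tau>. (\<tau>(m := undefined), \<tau> m)"])
  show "\<forall>a\<in>SIGMA \<sigma>:Inj m n. {..<n} - \<sigma> ` {..<m}. (\<lambda>\<tau>. (\<tau>(m := undefined), \<tau> m)) ((\<lambda>(\<sigma>, i). \<sigma>(m := i)) a) = a"
  proof
    fix a assume "a \<in> (SIGMA \<sigma>:Inj m n. {..<n} - \<sigma> ` {..<m})"
    then obtain \<sigma> i where a: "a = (\<sigma>, i)" "\<sigma> \<in> Inj m n" by auto
    then have "\<sigma> m = undefined" unfolding Inj_def by (auto simp: PiE_def extensional_def)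
    then show "(\<lambda>\<tau>. (\<tau>(m := undefined), \<tau> m)) ((\<lambda>(\<sigma>, i). \<sigma>(m := i)) a) = a"
      unfolding a by auto
  qed
  show "\<forall>a'\<in>Inj (Suc m) n. (\<lambda>(\<sigma>, i). \<sigma>(m := i)) ((\<lambda>\<tau>. (\<tau>(m := undefined), \<tau> m)) a') = a'"
    by auto
  show "(\<lambda>(\<sigma>, i). \<sigma>(m := i)) ` (SIGMA \<sigma>:Inj m n. {..<n} - \<sigma> ` {..<m}) \<subseteq> Inj (Suc m) n"
  proof (clarsimp)
    fix \<sigma> i assume s: "\<sigma> \<in> Inj m n" and i: "i < n" "i \<notin> \<sigma> ` {..<m}"
    have "\<sigma>(m := i) \<in> {..<Suc m} \<rightarrow>\<^sub>E {..<n}"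
      using s i unfolding Inj_def by (auto simp: PiE_def Pi_def extensional_def)
    moreover have "inj_on (\<sigma>(m := i)) {..<Suc m}"
    proof -
      have e: "{..<Suc m} = insert m {..<m}" by auto
      have "inj_on (\<sigma>(m := i)) {..<m}" using s unfolding Inj_def
        by (simp add: inj_on_def)
      moreover have "(\<sigma>(m := i)) ` {..<m} = \<sigma> ` {..<m}" by auto
      ultimately show ?thesis unfolding e using i by (simp add: inj_on_insert)
    qed
    ultimately show "\<sigma>(m := i) \<in> Inj (Suc m) n" unfolding Inj_def by simp
  qed
  show "(\<lambda>\<tau>. (\<tau>(m := undefined), \<tau> m)) ` Inj (Suc m) n \<subseteq> (SIGMA \<sigma>:Inj m n. {..<n} - \<sigma> ` {..<m})"
  proof
    fix p assume "p \<in> (\<lambda>\<tau>. (\<tau>(m := undefined), \<tau> m)) ` Inj (Suc m) n"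
    then obtain \<tau> where t: "\<tau> \<in> Inj (Suc m) n" and p: "p = (\<tau>(m := undefined), \<tau> m)" by auto
    have e: "{..<Suc m} = insert m {..<m}" by auto
    have t1: "\<tau> \<in> {..<Suc m} \<rightarrow>\<^sub>E {..<n}" and t2: "inj_on \<tau> (insert m {..<m})"
      using t unfolding Inj_def e by auto
    have "\<tau>(m := undefined) \<in> {..<m} \<rightarrow>\<^sub>E {..<n}"
      using t1 by (auto simp: PiE_def Pi_def extensional_def)
    moreover have "inj_on (\<tau>(m := undefined)) {..<m}"
      using t2 by (simp add: inj_on_def)
    moreover have "\<tau> m < n" using t1 by auto
    moreover have "\<tau> m \<notin> (\<tau>(m := undefined)) ` {..<m}"
    proof -
      have "(\<tau>(m := undefined)) ` {..<m} = \<tau> ` {..<m}" by auto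
      then show ?thesis using t2 by (simp add: inj_on_insert)
    qed
    ultimately show "p \<in> (SIGMA \<sigma>:Inj m n. {..<n} - \<sigma> ` {..<m})"
      unfolding p Inj_def by simp
  qed
qed

lemma Inj_Suc_sum: "(\<Sum>\<sigma>\<in>Inj (Suc m) n. f \<sigma>) = (\<Sum>\<sigma>\<in>Inj m n. \<Sum>i\<in>{..<n} - \<sigma> ` {..<m}. f (\<sigma>(m := i)))"
proof -
  have "(\<Sum>\<sigma>\<in>Inj m n. \<Sum>i\<in>{..<n} - \<sigma> ` {..<m}. f (\<sigma>(m := i))) =
      (\<Sum>p\<in>(SIGMA \<sigma>:Inj m n. {..<n} - \<sigma> ` {..<m}). f ((\<lambda>(\<sigma>, i). \<sigma>(m := i)) p))"
    by (subst sum.Sigma) (auto simp: finite_Inj split_beta)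
  also have "\<dots> = (\<Sum>\<sigma>\<in>Inj (Suc m) n. f \<sigma>)"
    using sum.reindex_bij_betw[OF Inj_Suc_bij, of f] by (simp add: split_beta)
  finally show ?thesis by simp
qed

lemma card_Inj_Suc: "card (Inj (Suc m) n) = card (Inj m n) * (n - m)"
proof -
  have "card (Inj (Suc m) n) = (\<Sum>\<sigma>\<in>Inj (Suc m) n. 1)" by simp
  also have "\<dots> = (\<Sum>\<sigma>\<in>Inj m n. card ({..<n} - \<sigma> ` {..<m}))"
    by (subst Inj_Suc_sum) simp
  also have "\<dots> = (\<Sum>\<sigma>\<in>Inj m n. n - m)"
  proof (rule sum.cong[OF refl])
    fix \<sigma> assume "\<sigma> \<in> Inj m n"
    then have "\<sigma> ` {..<m} \<subseteq> {..<n}" "card (\<sigma> ` {..<m}) = m"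
      by (auto simp: Inj_def card_image)
    then show "card ({..<n} - \<sigma> ` {..<m}) = n - m"
      by (simp add: card_Diff_subset finite_subset)
  qed
  finally show ?thesis by simp
qed

lemma card_Inj: "m \<le> n \<Longrightarrow> card (Inj m n) * fact (n - m) = (fact n :: nat)"
proof (induction m)
  case 0 then show ?case by (simp add: Inj_0)
next
  case (Suc m)
  have e: "n - m = Suc (n - Suc m)" using Suc.prems by simp
  have "card (Inj (Suc m) n) * fact (n - Suc m) = card (Inj m n) * ((n - m) * fact (n - Suc m))"
    by (simp add: card_Inj_Suc)
  also have "(n - m) * fact (n - Suc m) = (fact (n - m) :: nat)" unfolding e by simp
  finally show ?case using Suc.IH Suc.prems by simp
qed

lemma Inj_empty: "n < m \<Longrightarrow> Inj m n = {}"
proof (rule ccontr)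
  assume "n < m" "Inj m n \<noteq> {}"
  then obtain \<sigma> where "\<sigma> \<in> Inj m n" by auto
  then have "card (\<sigma> ` {..<m}) = m" "\<sigma> ` {..<m} \<subseteq> {..<n}" by (auto simp: Inj_def card_image)
  then have "m \<le> n" by (metis card_lessThan card_mono finite_lessThan)
  with \<open>n < m\<close> show False by simp
qed

definition Gd :: "real \<Rightarrow> segment set" where "Gd b = {y. 0 \<le> len y \<and> len y \<le> b}"

definition join :: "nat \<Rightarrow> (nat \<Rightarrow> segment) \<Rightarrow> (nat \<Rightarrow> segment) \<Rightarrow> nat \<Rightarrow> segment" where
  "join k xs ys = (\<lambda>i. if i < k then xs i else ys (i - k))"

lemma ind_sym: "ind a b = ind b a" by (auto simp: ind_def)
lemma ind_nonneg: "0 \<le> ind a b" by (simp add: ind_def)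
lemma ind_le1: "ind a b \<le> 1" by (simp add: ind_def)
lemma ind_sq: "ind a b * ind a b = ind a b" by (simp add: ind_def)

lemma sum_split_add: "(\<Sum>i<k+m. f i) = (\<Sum>i<k. f i) + (\<Sum>i<(m::nat). f (k+i))"
  by (induction m) (simp_all add: add.assoc)

lemma Lc_cong: "(\<And>i. i < n \<Longrightarrow> xs i = xs' i) \<Longrightarrow> Lc n xs = Lc n xs'"
  unfolding Lc_def by simp
lemma Nc_cong: "(\<And>i. i < n \<Longrightarrow> xs i = xs' i) \<Longrightarrow> Nc n xs = Nc n xs'"
  unfolding Nc_def by (intro arg_cong[where f="\<lambda>x. 1/2 * x"] sum.cong refl) auto
lemma Gexp_cong: "(\<And>i. i < n \<Longrightarrow> xs i = xs' i) \<Longrightarrow> Gexp a c n xs = Gexp a c n xs'"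
  unfolding Gexp_def using Lc_cong Nc_cong by metis
lemma calE_cong: "(\<And>i. i < k \<Longrightarrow> xs i = xs' i) \<Longrightarrow> (\<And>i. i < m \<Longrightarrow> ys i = ys' i) \<Longrightarrow>
   calE a c k xs m ys = calE a c k xs' m ys'"
  unfolding calE_def by (intro arg_cong[where f=exp] arg_cong2[where f="(+)"] arg_cong2[where f="(*)"] sum.cong refl) auto

lemma Nc_nonneg: "0 \<le> Nc n xs"
  unfolding Nc_def by (intro mult_nonneg_nonneg sum_nonneg) (auto simp: ind_nonneg)

lemma Lc_bounds: "(\<And>i. i < n \<Longrightarrow> xs i \<in> Gd b) \<Longrightarrow> 0 \<le> Lc n xs \<and> Lc n xs \<le> n * b"
proof -
  assume a: "\<And>i. i < n \<Longrightarrow> xs i \<in> Gd b"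
  have "0 \<le> Lc n xs" unfolding Lc_def using a by (intro sum_nonneg) (auto simp: Gd_def)
  moreover have "Lc n xs \<le> (\<Sum>i<n. b)" unfolding Lc_def using a by (intro sum_mono) (auto simp: Gd_def)
  ultimately show ?thesis by simp
qed

lemma Gexp_pos: "0 < Gexp a c n xs" by (simp add: Gexp_def)

lemma Gexp_bound: assumes "c \<le> 0" "\<And>i. i < n \<Longrightarrow> xs i \<in> Gd b"
  shows "Gexp a c n xs \<le> exp (\<bar>a\<bar> * (n * b))"
proof -
  from Lc_bounds[OF assms(2)] have L: "0 \<le> Lc n xs" "Lc n xs \<le> n * b" by auto
  have "a * Lc n xs \<le> \<bar>a\<bar> * Lc n xs" using L by (simp add: mult_right_mono)
  also have "\<dots> \<le> \<bar>a\<bar> * (n * b)" using L by (simp add: mult_left_mono)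
  finally have 1: "a * Lc n xs \<le> \<bar>a\<bar> * (n * b)" .
  have 2: "c * Nc n xs \<le> 0" using assms(1) Nc_nonneg by (simp add: mult_nonpos_nonneg)
  show ?thesis unfolding Gexp_def using 1 2 by simp
qed

lemma calE_pos: "0 < calE a c k xs m ys" by (simp add: calE_def)

lemma calE_bound: assumes "c \<le> 0" "\<And>i. i < m \<Longrightarrow> ys i \<in> Gd b"
  shows "calE a c k xs m ys \<le> exp (\<bar>a\<bar> * (m * b))"
proof -
  have L: "0 \<le> Lc m ys" "Lc m ys \<le> m * b" using Lc_bounds[OF assms(2)] by auto
  have "a * Lc m ys \<le> \<bar>a\<bar> * Lc m ys" using L by (simp add: mult_right_mono)
  also have "\<dots> \<le> \<bar>a\<bar> * (m * b)" using L by (simp add: mult_left_mono)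
  finally have 1: "a * (\<Sum>i<m. len (ys i)) \<le> \<bar>a\<bar> * (m * b)" unfolding Lc_def .
  have "0 \<le> (\<Sum>i<m. \<Sum>s<k. ind (xs s) (ys i)) + (\<Sum>i<m. \<Sum>j<m. if i < j then ind (ys i) (ys j) else 0)"
    by (intro add_nonneg_nonneg sum_nonneg) (auto simp: ind_nonneg)
  then have 2: "c * ((\<Sum>i<m. \<Sum>s<k. ind (xs s) (ys i)) + (\<Sum>i<m. \<Sum>j<m. if i < j then ind (ys i) (ys j) else 0)) \<le> 0"
    using assms(1) by (simp add: mult_nonpos_nonneg)
  show ?thesis unfolding calE_def using 1 2 by simp
qed

lemma Lc_perm: assumes "bij_betw \<tau> {..<n} {..<n}" shows "Lc n (\<lambda>i. xs (\<tau> i)) = Lc n xs"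
  unfolding Lc_def using sum.reindex_bij_betw[OF assms, of "\<lambda>j. len (xs j)"] by simp

lemma Nc_perm: assumes b: "bij_betw \<tau> {..<n} {..<n}" shows "Nc n (\<lambda>i. xs (\<tau> i)) = Nc n xs"
proof -
  have inj: "i < n \<Longrightarrow> j < n \<Longrightarrow> (\<tau> i \<noteq> \<tau> j) = (i \<noteq> j)" for i j
    using b unfolding bij_betw_def inj_on_def by auto
  have "(\<Sum>i<n. \<Sum>j<n. if i \<noteq> j then ind (xs (\<tau> i)) (xs (\<tau> j)) else 0)
      = (\<Sum>i<n. \<Sum>j<n. (\<lambda>i'. \<lambda>j'. if i' \<noteq> j' then ind (xs i') (xs j') else 0) (\<tau> i) (\<tau> j))"
    by (intro sum.cong refl) (simp add: inj)
  also have "\<dots> = (\<Sum>i<n. (\<lambda>i'. \<Sum>j'<n. if i' \<noteq> j' then ind (xs i') (xs j') else 0) (\<tau> i))"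
  proof (rule sum.cong[OF refl])
    fix i show "(\<Sum>j<n. (\<lambda>i'. \<lambda>j'. if i' \<noteq> j' then ind (xs i') (xs j') else 0) (\<tau> i) (\<tau> j)) =
       (\<lambda>i'. \<Sum>j'<n. if i' \<noteq> j' then ind (xs i') (xs j') else 0) (\<tau> i)"
      by (rule sum.reindex_bij_betw[OF b, of "\<lambda>j'. if \<tau> i \<noteq> j' then ind (xs (\<tau> i)) (xs j') else 0"])
  qed
  also have "\<dots> = (\<Sum>i'<n. \<Sum>j'<n. if i' \<noteq> j' then ind (xs i') (xs j') else 0)"
    by (rule sum.reindex_bij_betw[OF b, of "\<lambda>i'. \<Sum>j'<n. if i' \<noteq> j' then ind (xs i') (xs j') else 0"])
  finally show ?thesis unfolding Nc_def by simp
qed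

lemma Gexp_perm: "bij_betw \<tau> {..<n} {..<n} \<Longrightarrow> Gexp a c n (\<lambda>i. xs (\<tau> i)) = Gexp a c n xs"
  unfolding Gexp_def by (simp add: Lc_perm Nc_perm)

lemma Lc_join: "Lc (k+m) (join k xs ys) = Lc k xs + (\<Sum>i<m. len (ys i))"
  unfolding Lc_def sum_split_add by (simp add: join_def)

lemma sum_offdiag: "(\<Sum>i<(m::nat). \<Sum>j<m. if i \<noteq> j then ind (ys i) (ys j) else 0) =
   2 * (\<Sum>i<m. \<Sum>j<m. if i < j then ind (ys i) (ys j) else 0)"
proof -
  have "(\<Sum>i<m. \<Sum>j<m. if i \<noteq> j then ind (ys i) (ys j) else 0) =
     (\<Sum>i<m. \<Sum>j<m. (if i < j then ind (ys i) (ys j) else 0) + (if j < i then ind (ys i) (ys j) else 0))"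
    by (intro sum.cong refl) auto
  also have "\<dots> = (\<Sum>i<m. \<Sum>j<m. if i < j then ind (ys i) (ys j) else 0) + (\<Sum>i<m. \<Sum>j<m. if j < i then ind (ys i) (ys j) else 0)"
    by (simp add: sum.distrib)
  also have "(\<Sum>i<m. \<Sum>j<m. if j < i then ind (ys i) (ys j) else 0) = (\<Sum>j<m. \<Sum>i<m. if j < i then ind (ys j) (ys i) else 0)"
    by (subst sum.swap) (intro sum.cong refl, metis ind_sym)
  finally show ?thesis by simp
qed

lemma Nc_join: "Nc (k+m) (join k xs ys) = Nc k xs + (\<Sum>i<m. \<Sum>s<k. ind (xs s) (ys i))
   + (\<Sum>i<m. \<Sum>j<m. if i < j then ind (ys i) (ys j) else 0)"
proof -
  let ?A = "\<lambda>i j. if i \<noteq> j then ind (join k xs ys i) (join k xs ys j) else 0"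
  have "(\<Sum>i<k+m. \<Sum>j<k+m. ?A i j) = (\<Sum>i<k. \<Sum>j<k. ?A i j) + (\<Sum>i<k. \<Sum>j<m. ?A i (k+j))
      + ((\<Sum>i<m. \<Sum>j<k. ?A (k+i) j) + (\<Sum>i<m. \<Sum>j<m. ?A (k+i) (k+j)))"
    unfolding sum_split_add by (simp add: sum.distrib)
  also have "(\<Sum>i<k. \<Sum>j<k. ?A i j) = (\<Sum>i<k. \<Sum>j<k. if i \<noteq> j then ind (xs i) (xs j) else 0)"
    by (intro sum.cong refl) (simp add: join_def)
  also have "(\<Sum>i<k. \<Sum>j<m. ?A i (k+j)) = (\<Sum>i<m. \<Sum>s<k. ind (xs s) (ys i))"
    by (subst sum.swap) (intro sum.cong refl, simp add: join_def)
  also have "(\<Sum>i<m. \<Sum>j<k. ?A (k+i) j) = (\<Sum>i<m. \<Sum>s<k. ind (xs s) (ys i))"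
    by (intro sum.cong refl) (simp add: join_def ind_sym)
  also have "(\<Sum>i<m. \<Sum>j<m. ?A (k+i) (k+j)) = (\<Sum>i<m. \<Sum>j<m. if i \<noteq> j then ind (ys i) (ys j) else 0)"
    by (intro sum.cong refl) (simp add: join_def)
  finally show ?thesis unfolding Nc_def sum_offdiag by (simp add: algebra_simps)
qed

lemma Gexp_join: "Gexp a c (k+m) (join k xs ys) = Gexp a c k xs * calE a c k xs m ys"
  unfolding Gexp_def calE_def Lc_join Nc_join by (simp add: exp_add[symmetric] algebra_simps)

lemma ind_indicator: "ind a b = indicator ISet (a, b)"
  by (simp add: ind_def ISet_def indicator_def)

lemma borel_ind: "(\<lambda>p. ind (fst p) (snd p)) \<in> borel_measurable borel"
proof -
  have "(\<lambda>p. ind (fst p) (snd p)) = indicator ISet"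
    by (auto simp: ind_indicator)
  then show ?thesis using closed_ISet by (simp add: borel_closed)
qed

lemma borel_len: "len \<in> borel_measurable borel"
  unfolding len_def by (intro borel_measurable_continuous_onI continuous_intros)

locale segsetup =
  fixes lam :: "segment measure" and bb \<nu>1 \<nu>2 :: real
  assumes fin_lam: "finite_measure lam"
    and sets_lam: "sets lam = sets borel"
    and Gd_null: "emeasure lam (UNIV - Gd bb) = 0"
    and nu2: "\<nu>2 \<le> 0" and bb: "0 \<le> bb"
begin

abbreviation "P k \<equiv> PiM {..<k::nat} (\<lambda>_. lam)"
abbreviation "G \<equiv> Gexp \<nu>1 \<nu>2"
abbreviation "\<Lambda> \<equiv> measure lam (space lam)"

lemma space_lam: "space lam = UNIV"
  using sets_eq_imp_space_eq[OF sets_lam] by simp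

lemma sf_lam: "sigma_finite_measure lam"
proof -
  interpret finite_measure lam by (rule fin_lam)
  show ?thesis by (rule sigma_finite_measure_axioms)
qed

sublocale PS: product_sigma_finite "\<lambda>_::nat. lam"
  by (simp add: product_sigma_finite_def sf_lam)

lemma fps: "finite_product_sigma_finite (\<lambda>_::nat. lam) {..<k}"
  by (simp add: finite_product_sigma_finite_def finite_product_sigma_finite_axioms_def PS.product_sigma_finite_axioms)

lemma sf_P: "sigma_finite_measure (P k)"
proof -
  interpret finite_product_sigma_finite "\<lambda>_::nat. lam" "{..<k}" by (rule fps)
  show ?thesis by (rule sigma_finite_measure_axioms)
qed

lemma psf: "pair_sigma_finite (P k) (P m)"
  by (simp add: pair_sigma_finite_def sf_P)

lemma emeasure_lam_fin: "emeasure lam UNIV = ennreal \<Lambda>"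
  using fin_lam space_lam by (simp add: finite_measure.emeasure_eq_measure)

lemma Lambda_nonneg: "0 \<le> \<Lambda>" by simp

lemma space_P: "space (P k) = {..<k} \<rightarrow>\<^sub>E UNIV"
  by (simp add: space_PiM space_lam)

lemma emeasure_P: "emeasure (P k) (space (P k)) = ennreal (\<Lambda> ^ k)"
proof -
  have "emeasure (P k) ({..<k} \<rightarrow>\<^sub>E space lam) = (\<Prod>i<k. emeasure lam (space lam))"
    by (rule PS.emeasure_PiM) auto
  then show ?thesis using emeasure_lam_fin space_lam by (simp add: space_PiM ennreal_power)
qed

lemma fin_P: "finite_measure (P k)"
  by (rule finite_measureI) (simp add: emeasure_P)

lemma measure_P: "measure (P k) (space (P k)) = \<Lambda> ^ k"
  by (simp add: measure_def emeasure_P)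

lemma meas_lam_iff: "measurable M lam = measurable M borel"
  by (rule measurable_cong_sets[OF refl sets_lam])

lemma len_m: "f \<in> measurable M lam \<Longrightarrow> (\<lambda>x. len (f x)) \<in> borel_measurable M"
  using measurable_compose[OF _ borel_len] meas_lam_iff by blast

lemma ind_m: assumes "f \<in> measurable M lam" "g \<in> measurable M lam"
  shows "(\<lambda>x. ind (f x) (g x)) \<in> borel_measurable M"
proof -
  have "(\<lambda>x. (f x, g x)) \<in> measurable M (borel \<Otimes>\<^sub>M borel)"
    using assms meas_lam_iff by (intro measurable_Pair) auto
  then have "(\<lambda>x. (f x, g x)) \<in> measurable M borel" by (simp add: borel_prod)
  from measurable_compose[OF this borel_ind] show ?thesis by simp
qed

lemma comp_m: "i < n \<Longrightarrow> f \<in> measurable M (P n) \<Longrightarrow> (\<lambda>x. f x i) \<in> measurable M lam"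
  by (rule measurable_compose[OF _ measurable_component_singleton]) auto

lemma Gd_sets: "Gd bb \<in> sets lam"
proof -
  have "len -` {0..bb} \<inter> space borel \<in> sets borel"
    by (rule measurable_sets[OF borel_len]) auto
  then show ?thesis by (simp add: Gd_def sets_lam vimage_def)
qed

lemma G_m: assumes f: "f \<in> measurable M (P n)" shows "(\<lambda>x. G n (f x)) \<in> borel_measurable M"
proof -
  have 1: "(\<lambda>x. Lc n (f x)) \<in> borel_measurable M" unfolding Lc_def
    by (intro borel_measurable_sum len_m comp_m[OF _ f]) auto
  have 2: "(\<lambda>x. Nc n (f x)) \<in> borel_measurable M" unfolding Nc_def
  proof (intro borel_measurable_times borel_measurable_const borel_measurable_sum)
    fix i j assume "i \<in> {..<n}" "j \<in> {..<n}"
    then show "(\<lambda>x. if i \<noteq> j then ind (f x i) (f x j) else 0) \<in> borel_measurable M"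
      by (cases "i = j") (auto intro!: ind_m comp_m[OF _ f])
  qed
  show ?thesis unfolding Gexp_def
    by (intro measurable_compose[OF _ borel_measurable_exp] borel_measurable_add borel_measurable_times borel_measurable_const 1 2)
qed

lemma calE_m: assumes f: "f \<in> measurable M (P k)" and g: "g \<in> measurable M (P m)"
  shows "(\<lambda>x. calE \<nu>1 \<nu>2 k (f x) m (g x)) \<in> borel_measurable M"
proof -
  have 1: "(\<lambda>x. \<Sum>i<m. len (g x i)) \<in> borel_measurable M"
    by (intro borel_measurable_sum len_m comp_m[OF _ g]) auto
  have 2: "(\<lambda>x. \<Sum>i<m. \<Sum>s<k. ind (f x s) (g x i)) \<in> borel_measurable M"
    by (intro borel_measurable_sum ind_m comp_m[OF _ g] comp_m[OF _ f]) auto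
  have 3: "(\<lambda>x. \<Sum>i<m. \<Sum>j<m. if i < j then ind (g x i) (g x j) else 0) \<in> borel_measurable M"
  proof (intro borel_measurable_sum)
    fix i j assume "i \<in> {..<m}" "j \<in> {..<m}"
    then show "(\<lambda>x. if i < j then ind (g x i) (g x j) else 0) \<in> borel_measurable M"
      by (cases "i < j") (auto intro!: ind_m comp_m[OF _ g])
  qed
  show ?thesis unfolding calE_def
    by (intro measurable_compose[OF _ borel_measurable_exp] borel_measurable_add borel_measurable_times borel_measurable_const 1 2 3)
qed

lemma AE_good: "AE xs in P n. \<forall>i\<in>{..<n}. xs i \<in> Gd bb"
proof (rule AE_finite_allI)
  show "finite {..<n}" by simp
  fix i assume "i \<in> {..<n}"
  then have i: "i < n" by simp
  let ?N = "PiE {..<n} (\<lambda>j. if j = i then UNIV - Gd bb else UNIV)"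
  have u: "UNIV \<in> sets lam" using sets.top[of lam] space_lam by simp
  have u2: "UNIV - Gd bb \<in> sets lam" using u Gd_sets by auto
  have sN: "?N \<in> sets (P n)"
    using Gd_sets space_lam by (intro sets_PiM_I_finite) (auto simp: u u2)
  have "emeasure (P n) ?N = (\<Prod>j<n. emeasure lam (if j = i then UNIV - Gd bb else UNIV))"
    using Gd_sets space_lam by (intro PS.emeasure_PiM) (auto simp: u u2)
  also have "\<dots> = 0" using i Gd_null by (intro prod_zero) (auto intro!: bexI[of _ i])
  finally have "?N \<in> null_sets (P n)" using sN by auto
  moreover have "{xs \<in> space (P n). \<not> xs i \<in> Gd bb} \<subseteq> ?N"
    by (auto simp: space_P PiE_def Pi_def)
  ultimately show "AE xs in P n. xs i \<in> Gd bb" by (rule AE_I')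
qed

end

lemma prod_split_add: "(\<Prod>i<k+m. f i) = (\<Prod>i<k. f i) * (\<Prod>i<(m::nat). f (k+i))"
  by (induction m) (simp_all add: mult.assoc)

lemma exists_tau: assumes s: "\<sigma> \<in> Inj m (k+m)"
  shows "\<exists>\<tau>. bij_betw \<tau> {..<k+m} {..<k+m} \<and> (\<forall>i<m. \<tau> (\<sigma> i) = k + i)"
proof -
  define n where "n = k + m"
  define S where "S = \<sigma> ` {..<m}"
  have inj: "inj_on \<sigma> {..<m}" and Ssub: "S \<subseteq> {..<n}"
    using s by (auto simp: Inj_def S_def n_def)
  have cS: "card S = m" using inj by (simp add: S_def card_image)
  define R where "R = {..<n} - S"
  have cR: "card R = k" unfolding R_def using Ssub cS
    by (simp add: card_Diff_subset finite_subset n_def)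
  obtain h where h: "bij_betw h R {0..<k}"
    using ex_bij_betw_finite_nat[of R] cR by (auto simp: R_def)
  define \<tau> where "\<tau> j = (if j \<in> S then k + the_inv_into {..<m} \<sigma> j else h j)" for j
  have ti: "j \<in> S \<Longrightarrow> the_inv_into {..<m} \<sigma> j < m" for j
    using the_inv_into_into[OF inj, of j "{..<m}"] by (auto simp: S_def)
  have hR: "j \<in> R \<Longrightarrow> h j < k" for j using h by (auto simp: bij_betw_def)
  have img: "\<tau> ` {..<n} \<subseteq> {..<n}"
  proof
    fix y assume "y \<in> \<tau> ` {..<n}"
    then obtain j where j: "j < n" "y = \<tau> j" by auto
    show "y \<in> {..<n}"
    proof (cases "j \<in> S")
      case True then show ?thesis using j ti[OF True] by (simp add: \<tau>_def n_def)
    next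
      case False then have "j \<in> R" using j by (simp add: R_def)
      then have "h j < k" by (rule hR)
      then show ?thesis using j False by (simp add: \<tau>_def n_def)
    qed
  qed
  have injt: "inj_on \<tau> {..<n}"
  proof (rule inj_onI)
    fix x y assume x: "x \<in> {..<n}" and y: "y \<in> {..<n}" and e: "\<tau> x = \<tau> y"
    show "x = y"
    proof (cases "x \<in> S"; cases "y \<in> S")
      assume "x \<in> S" "y \<in> S"
      then have "the_inv_into {..<m} \<sigma> x = the_inv_into {..<m} \<sigma> y" using e by (simp add: \<tau>_def)
      then have "\<sigma> (the_inv_into {..<m} \<sigma> x) = \<sigma> (the_inv_into {..<m} \<sigma> y)" by simp
      then show ?thesis using f_the_inv_into_f[OF inj] \<open>x \<in> S\<close> \<open>y \<in> S\<close> by (simp add: S_def)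
    next
      assume "x \<in> S" "y \<notin> S"
      then have "y \<in> R" using y by (simp add: R_def)
      then show ?thesis using e \<open>x \<in> S\<close> \<open>y \<notin> S\<close> hR[of y] by (simp add: \<tau>_def)
    next
      assume "x \<notin> S" "y \<in> S"
      then have "x \<in> R" using x by (simp add: R_def)
      then show ?thesis using e \<open>y \<in> S\<close> \<open>x \<notin> S\<close> hR[of x] by (simp add: \<tau>_def)
    next
      assume "x \<notin> S" "y \<notin> S"
      then have "x \<in> R" "y \<in> R" using x y by (auto simp: R_def)
      then show ?thesis using e \<open>y \<notin> S\<close> \<open>x \<notin> S\<close> h by (simp add: \<tau>_def bij_betw_def inj_on_def)
    qed
  qed
  have "bij_betw \<tau> {..<n} {..<n}"
    unfolding bij_betw_def using injt endo_inj_surj[OF _ img injt] by simp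
  moreover have "\<forall>i<m. \<tau> (\<sigma> i) = k + i"
    using inj by (auto simp: \<tau>_def S_def the_inv_into_f_f)
  ultimately show ?thesis unfolding n_def by blast
qed

context segsetup begin

definition Tm :: "nat \<Rightarrow> nat \<Rightarrow> (nat \<Rightarrow> nat) \<Rightarrow> (nat \<Rightarrow> segment) \<times> (nat \<Rightarrow> segment) \<Rightarrow> nat \<Rightarrow> segment" where
  "Tm k m \<tau> p = (\<lambda>j\<in>{..<k+m}. join k (fst p) (snd p) (\<tau> j))"

lemma Tm_meas: assumes t: "\<tau> \<in> {..<k+m} \<rightarrow> {..<k+m}"
  shows "Tm k m \<tau> \<in> measurable (P k \<Otimes>\<^sub>M P m) (P (k+m))"
  unfolding Tm_def
proof (rule measurable_restrict)
  fix j assume "j \<in> {..<k+m}"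
  then have tj: "\<tau> j < k + m" using t by auto
  show "(\<lambda>p. join k (fst p) (snd p) (\<tau> j)) \<in> measurable (P k \<Otimes>\<^sub>M P m) lam"
  proof (cases "\<tau> j < k")
    case True
    then have "(\<lambda>p. join k (fst p) (snd p) (\<tau> j)) = (\<lambda>p. fst p (\<tau> j))" by (simp add: join_def)
    then show ?thesis using True by (simp add: comp_m[OF _ measurable_fst])
  next
    case False
    then have "(\<lambda>p. join k (fst p) (snd p) (\<tau> j)) = (\<lambda>p. snd p (\<tau> j - k))" by (simp add: join_def)
    moreover have "\<tau> j - k < m" using tj False by simp
    ultimately show ?thesis by (simp add: comp_m[OF _ measurable_snd])
  qed
qed

lemma distr_Tm: assumes b: "bij_betw \<tau> {..<k+m} {..<k+m}"
  shows "distr (P k \<Otimes>\<^sub>M P m) (P (k+m)) (Tm k m \<tau>) = P (k+m)"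
proof (rule PS.PiM_eqI)
  show "finite {..<k+m}" by simp
  show "sets (distr (P k \<Otimes>\<^sub>M P m) (P (k+m)) (Tm k m \<tau>)) = sets (P (k+m))" by simp
  fix A assume A: "\<And>i. i \<in> {..<k+m} \<Longrightarrow> A i \<in> sets lam"
  define ti where "ti = the_inv_into {..<k+m} \<tau>"
  have bti: "bij_betw ti {..<k+m} {..<k+m}" unfolding ti_def by (rule bij_betw_the_inv_into[OF b])
  have t1: "i < k+m \<Longrightarrow> \<tau> (ti i) = i" for i unfolding ti_def
    using f_the_inv_into_f_bij_betw[OF b] by simp
  have t2: "j < k+m \<Longrightarrow> ti (\<tau> j) = j" for j unfolding ti_def
    using b by (simp add: bij_betw_def the_inv_into_f_f)
  have t3: "i < k+m \<Longrightarrow> ti i < k+m" for i using bti by (auto simp: bij_betw_def)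
  have t4: "j < k+m \<Longrightarrow> \<tau> j < k+m" for j using b by (auto simp: bij_betw_def)
  have tmeas: "Tm k m \<tau> \<in> measurable (P k \<Otimes>\<^sub>M P m) (P (k+m))"
    using t4 by (intro Tm_meas) auto
  have As: "PiE {..<k+m} A \<in> sets (P (k+m))"
    using A by (intro sets_PiM_I_finite) auto
  let ?X = "PiE {..<k} (\<lambda>i. A (ti i))" and ?Y = "PiE {..<m} (\<lambda>i. A (ti (k+i)))"
  have pre: "Tm k m \<tau> -` PiE {..<k+m} A \<inter> space (P k \<Otimes>\<^sub>M P m) = ?X \<times> ?Y"
  proof (intro set_eqI iffI)
    fix p assume p: "p \<in> Tm k m \<tau> -` PiE {..<k+m} A \<inter> space (P k \<Otimes>\<^sub>M P m)"
    obtain xs ys where pe: "p = (xs, ys)" by (cases p)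
    have sp: "xs \<in> {..<k} \<rightarrow>\<^sub>E UNIV" "ys \<in> {..<m} \<rightarrow>\<^sub>E UNIV"
      using p by (auto simp: pe space_pair_measure space_P)
    have h: "\<And>j. j < k+m \<Longrightarrow> join k xs ys (\<tau> j) \<in> A j"
      using p by (auto simp: pe Tm_def PiE_def Pi_def)
    have "xs \<in> ?X"
    proof -
      have "xs i \<in> A (ti i)" if "i < k" for i
        using h[of "ti i"] t1[of i] t3[of i] that by (simp add: join_def)
      then show ?thesis using sp by (auto simp: PiE_def)
    qed
    moreover have "ys \<in> ?Y"
    proof -
      have "ys i \<in> A (ti (k+i))" if "i < m" for i
        using h[of "ti (k+i)"] t1[of "k+i"] t3[of "k+i"] that by (simp add: join_def)
      then show ?thesis using sp by (auto simp: PiE_def)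
    qed
    ultimately show "p \<in> ?X \<times> ?Y" by (simp add: pe)
  next
    fix p assume p: "p \<in> ?X \<times> ?Y"
    obtain xs ys where pe: "p = (xs, ys)" by (cases p)
    have x: "xs \<in> ?X" and y: "ys \<in> ?Y" using p pe by auto
    have "join k xs ys (\<tau> j) \<in> A j" if j: "j < k+m" for j
    proof (cases "\<tau> j < k")
      case True
      then show ?thesis using x t2[OF j] by (auto simp: join_def PiE_def Pi_def)
    next
      case False
      then have "\<tau> j - k < m" using t4[OF j] by simp
      then have "ys (\<tau> j - k) \<in> A (ti (k + (\<tau> j - k)))" using y by (auto simp: PiE_def Pi_def)
      then show ?thesis using False t2[OF j] by (simp add: join_def)
    qed
    then have "Tm k m \<tau> p \<in> PiE {..<k+m} A" by (simp add: Tm_def pe)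
    moreover have "p \<in> space (P k \<Otimes>\<^sub>M P m)"
      using x y by (auto simp: pe space_pair_measure space_P PiE_def)
    ultimately show "p \<in> Tm k m \<tau> -` PiE {..<k+m} A \<inter> space (P k \<Otimes>\<^sub>M P m)" by simp
  qed
  have XA: "?X \<in> sets (P k)" using A t3 by (intro sets_PiM_I_finite) auto
  have YA: "?Y \<in> sets (P m)" using A t3 by (intro sets_PiM_I_finite) auto
  have "emeasure (distr (P k \<Otimes>\<^sub>M P m) (P (k+m)) (Tm k m \<tau>)) (PiE {..<k+m} A)
      = emeasure (P k \<Otimes>\<^sub>M P m) (?X \<times> ?Y)"
    using tmeas As pre by (simp add: emeasure_distr)
  also have "\<dots> = emeasure (P k) ?X * emeasure (P m) ?Y"
    using XA YA by (rule sigma_finite_measure.emeasure_pair_measure_Times[OF sf_P])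
  also have "emeasure (P k) ?X = (\<Prod>i<k. emeasure lam (A (ti i)))"
    using A t3 by (intro PS.emeasure_PiM) auto
  also have "emeasure (P m) ?Y = (\<Prod>i<m. emeasure lam (A (ti (k+i))))"
    using A t3 by (intro PS.emeasure_PiM) auto
  also have "(\<Prod>i<k. emeasure lam (A (ti i))) * (\<Prod>i<m. emeasure lam (A (ti (k+i))))
      = (\<Prod>i<k+m. emeasure lam (A (ti i)))"
    by (rule prod_split_add[symmetric])
  also have "\<dots> = (\<Prod>j<k+m. emeasure lam (A j))"
    by (rule prod.reindex_bij_betw[OF bti])
  finally show "emeasure (distr (P k \<Otimes>\<^sub>M P m) (P (k+m)) (Tm k m \<tau>)) (PiE {..<k+m} A) = (\<Prod>j\<in>{..<k+m}. emeasure lam (A j))" .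
qed

end

lemma abs_int_le:
  fixes f :: "'a \<Rightarrow> real"
  assumes fm: "finite_measure M" and bd: "AE x in M. \<bar>f x\<bar> \<le> C" and f: "f \<in> borel_measurable M"
  shows "\<bar>\<integral>x. f x \<partial>M\<bar> \<le> C * measure M (space M)"
proof -
  interpret finite_measure M by (rule fm)
  have i: "integrable M f" by (rule integrable_const_bound[where B=C]) (use bd f in auto)
  have "\<bar>\<integral>x. f x \<partial>M\<bar> \<le> (\<integral>x. \<bar>f x\<bar> \<partial>M)" using integral_norm_bound[of M f] by simp
  also have "\<dots> \<le> (\<integral>x. C \<partial>M)" by (rule integral_mono_AE) (auto simp: i bd)
  also have "\<dots> = C * measure M (space M)" by simp
  finally show ?thesis .
qed

context segsetup begin

lemma int_bound_P:
  fixes f :: "(nat \<Rightarrow> segment) \<Rightarrow> real" and C :: real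
  assumes f: "f \<in> borel_measurable (P n)" and bd: "\<And>xs. (\<And>i. i < n \<Longrightarrow> xs i \<in> Gd bb) \<Longrightarrow> \<bar>f xs\<bar> \<le> C"
  shows "integrable (P n) f"
proof -
  interpret finite_measure "P n" by (rule fin_P)
  have "AE xs in P n. norm (f xs) \<le> C" using AE_good[of n] by eventually_elim (simp add: bd)
  then show ?thesis using f by (rule integrable_const_bound)
qed

lemma PE_add:
  assumes "\<And>n. integrable (P n) (F1 n)" "\<And>n. integrable (P n) (F2 n)"
    "summable (\<lambda>n. 1 / fact n * (\<integral>xs. F1 n xs \<partial>P n))" "summable (\<lambda>n. 1 / fact n * (\<integral>xs. F2 n xs \<partial>P n))"
  shows "poisson_expect lam (\<lambda>n xs. F1 n xs + F2 n xs) = poisson_expect lam F1 + poisson_expect lam F2"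
proof -
  have "(\<Sum>n. 1 / fact n * (\<integral>xs. F1 n xs + F2 n xs \<partial>P n)) =
        (\<Sum>n. 1 / fact n * (\<integral>xs. F1 n xs \<partial>P n) + 1 / fact n * (\<integral>xs. F2 n xs \<partial>P n))"
    using assms(1,2) by (simp add: distrib_left)
  also have "\<dots> = (\<Sum>n. 1 / fact n * (\<integral>xs. F1 n xs \<partial>P n)) + (\<Sum>n. 1 / fact n * (\<integral>xs. F2 n xs \<partial>P n))"
    by (rule suminf_add[OF assms(3,4), symmetric])
  finally show ?thesis unfolding poisson_expect_def by (simp add: distrib_left)
qed

end

locale gsetup = segsetup +
  fixes m :: nat and g :: "(nat \<Rightarrow> segment) \<Rightarrow> real" and Cg :: real
  assumes g_m: "g \<in> borel_measurable (P m)"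
    and g_bd: "\<And>ys. (\<And>i. i < m \<Longrightarrow> ys i \<in> Gd bb) \<Longrightarrow> \<bar>g ys\<bar> \<le> Cg"
    and g_loc: "\<And>ys ys'. (\<And>i. i < m \<Longrightarrow> ys i = ys' i) \<Longrightarrow> g ys = g ys'"
    and Cg: "0 \<le> Cg"
begin

definition "Jf k p = g (snd p) * (G k (fst p) * calE \<nu>1 \<nu>2 k (fst p) m (snd p))"
definition "J k = (\<integral>p. Jf k p \<partial>(P k \<Otimes>\<^sub>M P m))"
definition "Bk k = exp (\<bar>\<nu>1\<bar> * (real k * bb))"

lemma G_id_m: "G n \<in> borel_measurable (P n)"
  using G_m[OF measurable_ident_sets[OF refl]] by simp

lemma G_bd: "(\<And>i. i < n \<Longrightarrow> xs i \<in> Gd bb) \<Longrightarrow> 0 < G n xs \<and> G n xs \<le> Bk n"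
  using Gexp_bound[OF nu2] Gexp_pos by (simp add: Bk_def)

lemma gsig_m: assumes s: "\<And>i. i < m \<Longrightarrow> \<sigma> i < n"
  shows "(\<lambda>xs. g (\<lambda>i. xs (\<sigma> i))) \<in> borel_measurable (P n)"
proof -
  have "(\<lambda>xs. \<lambda>i\<in>{..<m}. xs (\<sigma> i)) \<in> measurable (P n) (P m)"
    by (rule measurable_restrict) (use s in \<open>auto intro!: measurable_component_singleton\<close>)
  from measurable_compose[OF this g_m] have "(\<lambda>xs. g (\<lambda>i\<in>{..<m}. xs (\<sigma> i))) \<in> borel_measurable (P n)" .
  moreover have "g (\<lambda>i\<in>{..<m}. xs (\<sigma> i)) = g (\<lambda>i. xs (\<sigma> i))" for xs by (rule g_loc) simp
  ultimately show ?thesis by simp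
qed

lemma step1:
  assumes s: "\<sigma> \<in> Inj m (k+m)"
  shows "integrable (P (k+m)) (\<lambda>xs. g (\<lambda>i. xs (\<sigma> i)) * G (k+m) xs) \<and> integrable (P k \<Otimes>\<^sub>M P m) (Jf k) \<and> (\<integral>xs. g (\<lambda>i. xs (\<sigma> i)) * G (k+m) xs \<partial>P (k+m)) = J k"
proof -
  obtain \<tau> where b: "bij_betw \<tau> {..<k+m} {..<k+m}" and t: "\<And>i. i < m \<Longrightarrow> \<tau> (\<sigma> i) = k + i"
    using exists_tau[OF s] by blast
  have sr: "\<And>i. i < m \<Longrightarrow> \<sigma> i < k+m" using s by (auto simp: Inj_def)
  define F where "F xs = g (\<lambda>i. xs (\<sigma> i)) * G (k+m) xs" for xs
  have Fm: "F \<in> borel_measurable (P (k+m))" unfolding F_def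
    by (intro borel_measurable_times gsig_m G_id_m sr)
  have tm: "Tm k m \<tau> \<in> measurable (P k \<Otimes>\<^sub>M P m) (P (k+m))"
    using b by (intro Tm_meas) (auto simp: bij_betw_def)
  have FT: "F (Tm k m \<tau> p) = Jf k p" for p
  proof -
    obtain xs ys where p: "p = (xs, ys)" by (cases p)
    have 1: "g (\<lambda>i. Tm k m \<tau> p (\<sigma> i)) = g ys"
      by (rule g_loc) (simp add: Tm_def p sr t join_def)
    have "G (k+m) (Tm k m \<tau> p) = G (k+m) (\<lambda>j. join k xs ys (\<tau> j))"
      by (rule Gexp_cong) (simp add: Tm_def p)
    also have "\<dots> = G (k+m) (join k xs ys)" by (rule Gexp_perm[OF b])
    also have "\<dots> = G k xs * calE \<nu>1 \<nu>2 k xs m ys" by (rule Gexp_join)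
    finally show ?thesis unfolding F_def Jf_def using 1 by (simp add: p)
  qed
  have Fi: "integrable (P (k+m)) F"
  proof (rule int_bound_P[OF Fm])
    fix xs assume gd: "\<And>i. i < k+m \<Longrightarrow> xs i \<in> Gd bb"
    have "\<bar>g (\<lambda>i. xs (\<sigma> i))\<bar> \<le> Cg" using gd sr by (intro g_bd) auto
    moreover have "0 < G (k+m) xs" "G (k+m) xs \<le> Bk (k+m)" using G_bd[OF gd] by auto
    ultimately show "\<bar>F xs\<bar> \<le> Cg * Bk (k+m)" unfolding F_def
      by (simp add: abs_mult mult_mono Cg)
  qed
  have D: "distr (P k \<Otimes>\<^sub>M P m) (P (k+m)) (Tm k m \<tau>) = P (k+m)" by (rule distr_Tm[OF b])
  have "integrable (P k \<Otimes>\<^sub>M P m) (\<lambda>p. F (Tm k m \<tau> p))"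
    using Fi integrable_distr_eq[OF tm Fm] D by simp
  then have "integrable (P k \<Otimes>\<^sub>M P m) (Jf k)" by (simp add: FT)
  moreover have "(\<integral>xs. F xs \<partial>P (k+m)) = J k"
    using integral_distr[OF tm Fm] D by (simp add: FT J_def)
  ultimately show ?thesis using Fi unfolding F_def by simp
qed

end

context gsetup begin

definition "E k ys = (\<integral>xs. calE \<nu>1 \<nu>2 k xs m ys * G k xs \<partial>P k)"
definition "h k ys = g ys * (1 / fact k * E k ys)"

lemma sum_g_m: "(\<lambda>xs. \<Sum>\<sigma>\<in>Inj m n. g (\<lambda>i. xs (\<sigma> i))) \<in> borel_measurable (P n)"
  by (intro borel_measurable_sum gsig_m) (auto simp: Inj_def)

lemma term_int: "integrable (P n) (\<lambda>xs. (\<Sum>\<sigma>\<in>Inj m n. g (\<lambda>i. xs (\<sigma> i))) * G n xs)"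
proof (rule int_bound_P)
  show "(\<lambda>xs. (\<Sum>\<sigma>\<in>Inj m n. g (\<lambda>i. xs (\<sigma> i))) * G n xs) \<in> borel_measurable (P n)"
    by (intro borel_measurable_times sum_g_m G_id_m)
  fix xs assume gd: "\<And>i. i < n \<Longrightarrow> xs i \<in> Gd bb"
  have "\<bar>\<Sum>\<sigma>\<in>Inj m n. g (\<lambda>i. xs (\<sigma> i))\<bar> \<le> (\<Sum>\<sigma>\<in>Inj m n. Cg)"
  proof -
    have "\<bar>\<Sum>\<sigma>\<in>Inj m n. g (\<lambda>i. xs (\<sigma> i))\<bar> \<le> (\<Sum>\<sigma>\<in>Inj m n. \<bar>g (\<lambda>i. xs (\<sigma> i))\<bar>)" by (rule sum_abs)
    also have "\<dots> \<le> (\<Sum>\<sigma>\<in>Inj m n. Cg)"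
      by (intro sum_mono g_bd gd) (auto simp: Inj_def)
    finally show ?thesis .
  qed
  moreover have "0 < G n xs" "G n xs \<le> Bk n" using G_bd[OF gd] by auto
  ultimately show "\<bar>(\<Sum>\<sigma>\<in>Inj m n. g (\<lambda>i. xs (\<sigma> i))) * G n xs\<bar> \<le> (\<Sum>\<sigma>\<in>Inj m n. Cg) * Bk n"
    by (simp add: abs_mult mult_mono Cg)
qed

lemma step2: "1 / fact n * (\<integral>xs. (\<Sum>\<sigma>\<in>Inj m n. g (\<lambda>i. xs (\<sigma> i))) * G n xs \<partial>P n)
   = (if m \<le> n then J (n - m) / fact (n - m) else 0)"
proof (cases "m \<le> n")
  case False then show ?thesis by (simp add: Inj_empty)
next
  case True
  define k where "k = n - m"
  have n: "n = k + m" using True by (simp add: k_def)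
  have "(\<integral>xs. (\<Sum>\<sigma>\<in>Inj m n. g (\<lambda>i. xs (\<sigma> i))) * G n xs \<partial>P n)
     = (\<integral>xs. (\<Sum>\<sigma>\<in>Inj m n. g (\<lambda>i. xs (\<sigma> i)) * G n xs) \<partial>P n)"
    by (simp add: sum_distrib_right)
  also have "\<dots> = (\<Sum>\<sigma>\<in>Inj m n. (\<integral>xs. g (\<lambda>i. xs (\<sigma> i)) * G n xs \<partial>P n))"
  proof (rule Bochner_Integration.integral_sum)
    fix \<sigma> assume "\<sigma> \<in> Inj m n"
    then have "\<sigma> \<in> Inj m (k+m)" by (simp add: n)
    from step1[OF this] have "integrable (P (k+m)) (\<lambda>xs. g (\<lambda>i. xs (\<sigma> i)) * G (k+m) xs)"
      by blast
    then show "integrable (P n) (\<lambda>xs. g (\<lambda>i. xs (\<sigma> i)) * G n xs)" by (simp add: n)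
  qed
  also have "\<dots> = (\<Sum>\<sigma>\<in>Inj m n. J k)"
    by (intro sum.cong refl) (use step1 in \<open>simp add: n\<close>)
  also have "\<dots> = real (card (Inj m n)) * J k" by simp
  finally have 1: "(\<integral>xs. (\<Sum>\<sigma>\<in>Inj m n. g (\<lambda>i. xs (\<sigma> i))) * G n xs \<partial>P n) = real (card (Inj m n)) * J k" .
  have "real (card (Inj m n)) * fact k = fact n"
    using card_Inj[OF True] unfolding k_def by (metis of_nat_fact of_nat_mult)
  then have "real (card (Inj m n)) = fact n / fact k" by (simp add: field_simps)
  then show ?thesis using True 1 by (simp add: k_def)
qed

lemma J_int: "integrable (P k \<Otimes>\<^sub>M P m) (Jf k)"
proof -
  have "(\<lambda>i\<in>{..<m}. k + i) \<in> Inj m (k+m)" by (auto simp: Inj_def inj_on_def)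
  from step1[OF this] show ?thesis by blast
qed

lemma step4: "J k = (\<integral>ys. g ys * E k ys \<partial>P m)"
proof -
  interpret pair_sigma_finite "P k" "P m" by (rule psf)
  have e: "(\<lambda>(x, y). g y * (G k x * calE \<nu>1 \<nu>2 k x m y)) = Jf k"
    by (auto simp: Jf_def fun_eq_iff)
  have i: "integrable (P k \<Otimes>\<^sub>M P m) (\<lambda>(x, y). g y * (G k x * calE \<nu>1 \<nu>2 k x m y))"
    unfolding e by (rule J_int)
  have eqE: "(\<integral>x. g y * (G k x * calE \<nu>1 \<nu>2 k x m y) \<partial>P k) = g y * E k y" for y
  proof -
    have "(\<integral>x. G k x * calE \<nu>1 \<nu>2 k x m y \<partial>P k) = E k y" unfolding E_def by (simp add: mult.commute)
    then show ?thesis by simp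
  qed
  have "J k = (\<integral>y. (\<integral>x. g y * (G k x * calE \<nu>1 \<nu>2 k x m y) \<partial>P k) \<partial>P m)"
    using integral_snd[OF i] unfolding e J_def by simp
  also have "\<dots> = (\<integral>y. g y * E k y \<partial>P m)" by (simp only: eqE)
  finally show ?thesis .
qed

lemma E_m: "(\<lambda>ys. E k ys) \<in> borel_measurable (P m)"
proof -
  have "(\<lambda>p. calE \<nu>1 \<nu>2 k (snd p) m (fst p) * G k (snd p)) \<in> borel_measurable (P m \<Otimes>\<^sub>M P k)"
    by (intro borel_measurable_times calE_m G_m measurable_fst measurable_snd)
  moreover have "(\<lambda>(ys, xs). calE \<nu>1 \<nu>2 k xs m ys * G k xs) = (\<lambda>p. calE \<nu>1 \<nu>2 k (snd p) m (fst p) * G k (snd p))"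
    by auto
  ultimately have "(\<lambda>(ys, xs). calE \<nu>1 \<nu>2 k xs m ys * G k xs) \<in> borel_measurable (P m \<Otimes>\<^sub>M P k)" by simp
  from sigma_finite_measure.borel_measurable_lebesgue_integral[OF sf_P this]
  show ?thesis unfolding E_def .
qed

lemma Bk_pow: "Bk k = exp (\<bar>\<nu>1\<bar> * bb) ^ k"
  unfolding Bk_def exp_of_nat_mult[symmetric] by (simp add: ac_simps)

lemma Bk_pos: "0 < Bk k" by (simp add: Bk_def)

lemma E_bd: assumes gd: "\<And>i. i < m \<Longrightarrow> ys i \<in> Gd bb"
  shows "\<bar>E k ys\<bar> \<le> Bk m * Bk k * \<Lambda> ^ k"
proof -
  have rs: "(\<lambda>i\<in>{..<m}. ys i) \<in> space (P m)" by (simp add: space_P)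
  have eq: "calE \<nu>1 \<nu>2 k xs m ys = calE \<nu>1 \<nu>2 k xs m (\<lambda>i\<in>{..<m}. ys i)" for xs
    by (rule calE_cong) auto
  have meas: "(\<lambda>xs. calE \<nu>1 \<nu>2 k xs m ys * G k xs) \<in> borel_measurable (P k)"
    unfolding eq by (intro borel_measurable_times calE_m G_m measurable_ident_sets measurable_const rs) auto
  have "AE xs in P k. \<bar>calE \<nu>1 \<nu>2 k xs m ys * G k xs\<bar> \<le> Bk m * Bk k"
    using AE_good[of k]
  proof eventually_elim
    case (elim xs)
    have "0 < calE \<nu>1 \<nu>2 k xs m ys" "calE \<nu>1 \<nu>2 k xs m ys \<le> Bk m"
      using calE_pos calE_bound[OF nu2 gd] by (auto simp: Bk_def)
    moreover have "0 < G k xs" "G k xs \<le> Bk k" using G_bd[of k xs] elim by auto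
    ultimately show ?case by (simp add: abs_mult mult_mono)
  qed
  from abs_int_le[OF fin_P this meas] show ?thesis unfolding E_def measure_P by simp
qed

definition "rr = exp (\<bar>\<nu>1\<bar> * bb) * \<Lambda>"

lemma rr_nonneg: "0 \<le> rr" by (simp add: rr_def)

lemma a_bd: assumes gd: "\<And>i. i < m \<Longrightarrow> ys i \<in> Gd bb"
  shows "\<bar>1 / fact k * E k ys\<bar> \<le> Bk m * (inverse (fact k) * rr ^ k)"
proof -
  have "\<bar>1 / fact k * E k ys\<bar> = inverse (fact k) * \<bar>E k ys\<bar>" by (simp add: abs_mult field_simps)
  also have "\<dots> \<le> inverse (fact k) * (Bk m * Bk k * \<Lambda> ^ k)"
  proof (rule mult_left_mono)
    show "\<bar>E k ys\<bar> \<le> Bk m * Bk k * \<Lambda> ^ k" by (rule E_bd) (rule gd)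
    show "0 \<le> inverse (fact k :: real)" by simp
  qed
  also have "Bk k * \<Lambda> ^ k = rr ^ k" by (simp add: rr_def Bk_pow power_mult_distrib)
  then have "inverse (fact k) * (Bk m * Bk k * \<Lambda> ^ k) = Bk m * (inverse (fact k) * rr ^ k)"
    by (simp add: ac_simps)
  finally show ?thesis .
qed

lemma a_summable: assumes gd: "\<And>i. i < m \<Longrightarrow> ys i \<in> Gd bb"
  shows "summable (\<lambda>k. \<bar>1 / fact k * E k ys\<bar>)"
  by (rule summable_comparison_test'[OF summable_mult[OF summable_exp[of rr]], of 0]) (use a_bd[OF gd] in simp)

lemma h_m: "h k \<in> borel_measurable (P m)"
  unfolding h_def[abs_def] by (intro borel_measurable_times g_m borel_measurable_const E_m)

lemma h_bd: assumes gd: "\<And>i. i < m \<Longrightarrow> ys i \<in> Gd bb"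
  shows "\<bar>h k ys\<bar> \<le> Cg * (Bk m * (inverse (fact k) * rr ^ k))"
proof -
  have g1: "\<bar>g ys\<bar> \<le> Cg" by (rule g_bd) (rule gd)
  have a1: "\<bar>1 / fact k * E k ys\<bar> \<le> Bk m * (inverse (fact k) * rr ^ k)" by (rule a_bd) (rule gd)
  have "\<bar>h k ys\<bar> = \<bar>g ys\<bar> * \<bar>1 / fact k * E k ys\<bar>" unfolding h_def by (rule abs_mult)
  also have "\<dots> \<le> Cg * (Bk m * (inverse (fact k) * rr ^ k))" by (rule mult_mono[OF g1 a1]) (simp_all add: Cg)
  finally show ?thesis .
qed

lemma h_int: "integrable (P m) (h k)"
  by (rule int_bound_P[OF h_m h_bd])

lemma h_integral: "(\<integral>ys. h k ys \<partial>P m) = J k / fact k"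
proof -
  have "(\<integral>ys. h k ys \<partial>P m) = (\<integral>ys. 1 / fact k * (g ys * E k ys) \<partial>P m)"
    unfolding h_def by (simp add: ac_simps)
  also have "\<dots> = 1 / fact k * J k" by (simp add: step4)
  finally show ?thesis by simp
qed

lemma step5: "(\<lambda>k. J k / fact k) sums (\<integral>ys. (\<Sum>k. h k ys) \<partial>P m)"
proof -
  have AEs: "AE ys in P m. summable (\<lambda>k. norm (h k ys))"
    using AE_good[of m]
  proof eventually_elim
    case (elim ys)
    then have gd: "\<And>i. i < m \<Longrightarrow> ys i \<in> Gd bb" by simp
    have "summable (\<lambda>k. \<bar>g ys\<bar> * \<bar>1 / fact k * E k ys\<bar>)"
      by (rule summable_mult[OF a_summable[OF gd]])
    then show ?case unfolding h_def by (simp add: abs_mult)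
  qed
  have si: "summable (\<lambda>k. \<integral>ys. norm (h k ys) \<partial>P m)"
  proof (rule summable_comparison_test'[OF summable_mult2[OF summable_mult[OF summable_exp[of rr], of "Cg * Bk m"], of "\<Lambda> ^ m"], of 0])
    fix k :: nat assume "0 \<le> k"
    have "AE ys in P m. \<bar>norm (h k ys)\<bar> \<le> Cg * (Bk m * (inverse (fact k) * rr ^ k))"
      using AE_good[of m] by eventually_elim (simp add: h_bd)
    from abs_int_le[OF fin_P this] h_m
    show "norm (\<integral>ys. norm (h k ys) \<partial>P m) \<le> Cg * Bk m * (inverse (fact k) * rr ^ k) * \<Lambda> ^ m"
      by (simp add: measure_P ac_simps)
  qed
  from sums_integral[OF h_int AEs si] show ?thesis by (simp add: h_integral)
qed

lemma main_sums: "(\<lambda>n. 1 / fact n * (\<integral>xs. (\<Sum>\<sigma>\<in>Inj m n. g (\<lambda>i. xs (\<sigma> i))) * G n xs \<partial>P n))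
   sums (\<integral>ys. (\<Sum>k. h k ys) \<partial>P m)"
proof -
  let ?t = "\<lambda>n. 1 / fact n * (\<integral>xs. (\<Sum>\<sigma>\<in>Inj m n. g (\<lambda>i. xs (\<sigma> i))) * G n xs \<partial>P n)"
  have tz: "\<And>i. ?t i = (if m \<le> i then J (i - m) / fact (i - m) else 0)" by (rule step2)
  have "(\<lambda>i. ?t (i + m)) = (\<lambda>k. J k / fact k)" unfolding tz by simp
  then have "(\<lambda>i. ?t (i + m)) sums (\<integral>ys. (\<Sum>k. h k ys) \<partial>P m)" using step5 by simp
  moreover have "(\<Sum>i<m. ?t i) = 0" unfolding tz by simp
  ultimately show ?thesis using sums_iff_shift[of ?t m] by simp
qed

lemma main: "poisson_expect lam (\<lambda>n xs. (\<Sum>\<sigma>\<in>Inj m n. g (\<lambda>i. xs (\<sigma> i))) * G n xs)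
   = (\<integral>ys. g ys * poisson_expect lam (\<lambda>n xs. calE \<nu>1 \<nu>2 n xs m ys * G n xs) \<partial>P m)"
proof -
  have L: "poisson_expect lam (\<lambda>n xs. (\<Sum>\<sigma>\<in>Inj m n. g (\<lambda>i. xs (\<sigma> i))) * G n xs)
      = exp (- \<Lambda>) * (\<integral>ys. (\<Sum>k. h k ys) \<partial>P m)"
    unfolding poisson_expect_def using sums_unique[OF main_sums] by simp
  have pe: "poisson_expect lam (\<lambda>n xs. calE \<nu>1 \<nu>2 n xs m ys * G n xs) = exp (- \<Lambda>) * (\<Sum>k. 1 / fact k * E k ys)" for ys
    unfolding poisson_expect_def E_def by simp
  have "(\<integral>ys. g ys * poisson_expect lam (\<lambda>n xs. calE \<nu>1 \<nu>2 n xs m ys * G n xs) \<partial>P m)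
      = (\<integral>ys. exp (- \<Lambda>) * (\<Sum>k. h k ys) \<partial>P m)"
  proof (rule integral_cong_AE)
    show "(\<lambda>ys. g ys * poisson_expect lam (\<lambda>n xs. calE \<nu>1 \<nu>2 n xs m ys * G n xs)) \<in> borel_measurable (P m)"
      unfolding pe by (intro borel_measurable_times g_m borel_measurable_const borel_measurable_suminf E_m)
    show "(\<lambda>ys. exp (- \<Lambda>) * (\<Sum>k. h k ys)) \<in> borel_measurable (P m)"
      by (intro borel_measurable_times borel_measurable_const borel_measurable_suminf h_m)
    show "AE ys in P m. g ys * poisson_expect lam (\<lambda>n xs. calE \<nu>1 \<nu>2 n xs m ys * G n xs) = exp (- \<Lambda>) * (\<Sum>k. h k ys)"
      using AE_good[of m]
    proof eventually_elim
      case (elim ys)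
      then have gd: "\<And>i. i < m \<Longrightarrow> ys i \<in> Gd bb" by simp
      have sa: "summable (\<lambda>k. 1 / fact k * E k ys)"
        using a_summable[OF gd] by (rule summable_rabs_cancel)
      have "(\<Sum>k. h k ys) = g ys * (\<Sum>k. 1 / fact k * E k ys)"
        unfolding h_def by (rule suminf_mult[OF sa])
      then show ?case unfolding pe by simp
    qed
  qed
  also have "\<dots> = exp (- \<Lambda>) * (\<integral>ys. (\<Sum>k. h k ys) \<partial>P m)" by simp
  finally show ?thesis using L by simp
qed

lemma main_summable: "summable (\<lambda>n. 1 / fact n * (\<integral>xs. (\<Sum>\<sigma>\<in>Inj m n. g (\<lambda>i. xs (\<sigma> i))) * G n xs \<partial>P n))"
  using main_sums by (rule sums_summable)

lemma PEc_m: "(\<lambda>ys. poisson_expect lam (\<lambda>n xs. calE \<nu>1 \<nu>2 n xs m ys * G n xs)) \<in> borel_measurable (P m)"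
proof -
  have "(\<lambda>ys. poisson_expect lam (\<lambda>n xs. calE \<nu>1 \<nu>2 n xs m ys * G n xs)) = (\<lambda>ys. exp (- \<Lambda>) * (\<Sum>k. 1 / fact k * E k ys))"
    by (simp add: poisson_expect_def E_def)
  moreover have "(\<lambda>ys. exp (- \<Lambda>) * (\<Sum>k. 1 / fact k * E k ys)) \<in> borel_measurable (P m)"
    by (intro borel_measurable_times borel_measurable_const borel_measurable_suminf E_m)
  ultimately show ?thesis by simp
qed

end

context segsetup begin

lemma PE_add3:
  assumes "\<And>n. integrable (P n) (F1 n)" "\<And>n. integrable (P n) (F2 n)" "\<And>n. integrable (P n) (F3 n)"
    "summable (\<lambda>n. 1 / fact n * (\<integral>xs. F1 n xs \<partial>P n))" "summable (\<lambda>n. 1 / fact n * (\<integral>xs. F2 n xs \<partial>P n))"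
    "summable (\<lambda>n. 1 / fact n * (\<integral>xs. F3 n xs \<partial>P n))"
  shows "poisson_expect lam (\<lambda>n xs. F1 n xs + F2 n xs + F3 n xs) = poisson_expect lam F1 + poisson_expect lam F2 + poisson_expect lam F3"
proof -
  have "(\<Sum>n. 1 / fact n * (\<integral>xs. F1 n xs + F2 n xs + F3 n xs \<partial>P n)) =
        (\<Sum>n. 1 / fact n * (\<integral>xs. F1 n xs \<partial>P n) + 1 / fact n * (\<integral>xs. F2 n xs \<partial>P n) + 1 / fact n * (\<integral>xs. F3 n xs \<partial>P n))"
    using assms(1,2,3) by (simp add: distrib_left)
  also have "\<dots> = (\<Sum>n. 1 / fact n * (\<integral>xs. F1 n xs \<partial>P n) + 1 / fact n * (\<integral>xs. F2 n xs \<partial>P n)) + (\<Sum>n. 1 / fact n * (\<integral>xs. F3 n xs \<partial>P n))"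
    by (rule suminf_add[OF summable_add[OF assms(4,5)] assms(6), symmetric])
  also have "(\<Sum>n. 1 / fact n * (\<integral>xs. F1 n xs \<partial>P n) + 1 / fact n * (\<integral>xs. F2 n xs \<partial>P n)) =
      (\<Sum>n. 1 / fact n * (\<integral>xs. F1 n xs \<partial>P n)) + (\<Sum>n. 1 / fact n * (\<integral>xs. F2 n xs \<partial>P n))"
    by (rule suminf_add[OF assms(4,5), symmetric])
  finally show ?thesis unfolding poisson_expect_def by (simp add: distrib_left)
qed

lemma P1_int:
  fixes \<Phi> :: "(nat \<Rightarrow> segment) \<Rightarrow> real"
  assumes m: "\<Phi> \<in> borel_measurable (P 1)" and e: "\<And>ys. \<Phi> ys = \<Phi>' (ys 0)"
  shows "(\<integral>ys. \<Phi> ys \<partial>P 1) = (\<integral>y. \<Phi>' y \<partial>lam)"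
proof -
  have e1: "{..<1::nat} = {0}" by auto
  have mr: "(\<lambda>y. \<lambda>i\<in>{..<1::nat}. y) \<in> measurable lam (P 1)"
    by (rule measurable_restrict) simp
  have "\<Phi>' = (\<lambda>y. \<Phi> (\<lambda>i\<in>{..<1::nat}. y))" using e by auto
  then have pm: "\<Phi>' \<in> borel_measurable lam" using measurable_compose[OF mr m] by simp
  have "(\<integral>ys. \<Phi> ys \<partial>P 1) = (\<integral>ys. \<Phi>' (ys 0) \<partial>PiM {0::nat} (\<lambda>_. lam))" using e e1 by simp
  also have "\<dots> = (\<integral>y. \<Phi>' y \<partial>lam)" by (rule PS.product_integral_singleton[OF pm])
  finally show ?thesis .
qed

end

lemma Inj1_sum: "(\<Sum>\<sigma>\<in>Inj 1 n. f (\<sigma> 0)) = (\<Sum>i<n. f i)"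
proof -
  have "(\<Sum>\<sigma>\<in>Inj (Suc 0) n. f (\<sigma> 0)) = (\<Sum>\<sigma>\<in>Inj 0 n. \<Sum>i\<in>{..<n} - \<sigma> ` {..<0}. f ((\<sigma>(0 := i)) 0))"
    by (rule Inj_Suc_sum)
  then show ?thesis by (simp add: Inj_0)
qed

lemma Inj2_sum: "(\<Sum>\<sigma>\<in>Inj 2 n. f (\<sigma> 0) (\<sigma> 1)) = (\<Sum>i<n. \<Sum>j\<in>{..<n} - {i}. f i j)"
proof -
  have "(\<Sum>\<sigma>\<in>Inj (Suc 1) n. f (\<sigma> 0) (\<sigma> 1)) = (\<Sum>\<sigma>\<in>Inj 1 n. \<Sum>j\<in>{..<n} - \<sigma> ` {..<1}. f ((\<sigma>(1 := j)) 0) ((\<sigma>(1 := j)) 1))"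
    by (rule Inj_Suc_sum)
  also have "\<dots> = (\<Sum>\<sigma>\<in>Inj 1 n. (\<lambda>a. \<Sum>j\<in>{..<n} - {a}. f a j) (\<sigma> 0))"
    by (simp add: lessThan_Suc)
  also have "\<dots> = (\<Sum>i<n. \<Sum>j\<in>{..<n} - {i}. f i j)" by (rule Inj1_sum)
  finally show ?thesis unfolding Suc_1 .
qed

lemma Inj3_sum: "(\<Sum>\<sigma>\<in>Inj 3 n. f (\<sigma> 0) (\<sigma> 1) (\<sigma> 2)) = (\<Sum>i<n. \<Sum>j\<in>{..<n} - {i}. \<Sum>k\<in>{..<n} - {i, j}. f i j k)"
proof -
  have e: "Inj 3 n = Inj (Suc 2) n" by simp
  have "(\<Sum>\<sigma>\<in>Inj (Suc 2) n. f (\<sigma> 0) (\<sigma> 1) (\<sigma> 2)) = (\<Sum>\<sigma>\<in>Inj 2 n. \<Sum>k\<in>{..<n} - \<sigma> ` {..<2}. f ((\<sigma>(2 := k)) 0) ((\<sigma>(2 := k)) 1) ((\<sigma>(2 := k)) 2))"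
    by (rule Inj_Suc_sum)
  also have "\<dots> = (\<Sum>\<sigma>\<in>Inj 2 n. (\<lambda>a b. \<Sum>k\<in>{..<n} - {a, b}. f a b k) (\<sigma> 0) (\<sigma> 1))"
    by (simp add: lessThan_Suc numeral_2_eq_2 insert_commute)
  also have "\<dots> = (\<Sum>i<n. \<Sum>j\<in>{..<n} - {i}. \<Sum>k\<in>{..<n} - {i, j}. f i j k)" by (rule Inj2_sum)
  finally show ?thesis unfolding e .
qed

lemma Inj4_sum: "(\<Sum>\<sigma>\<in>Inj 4 n. f (\<sigma> 0) (\<sigma> 1) (\<sigma> 2) (\<sigma> 3)) =
   (\<Sum>i<n. \<Sum>j\<in>{..<n} - {i}. \<Sum>k\<in>{..<n} - {i, j}. \<Sum>l\<in>{..<n} - {i, j, k}. f i j k l)"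
proof -
  have e: "Inj 4 n = Inj (Suc 3) n" by simp
  have "(\<Sum>\<sigma>\<in>Inj (Suc 3) n. f (\<sigma> 0) (\<sigma> 1) (\<sigma> 2) (\<sigma> 3)) = (\<Sum>\<sigma>\<in>Inj 3 n. \<Sum>l\<in>{..<n} - \<sigma> ` {..<3}. f ((\<sigma>(3 := l)) 0) ((\<sigma>(3 := l)) 1) ((\<sigma>(3 := l)) 2) ((\<sigma>(3 := l)) 3))"
    by (rule Inj_Suc_sum)
  also have "\<dots> = (\<Sum>\<sigma>\<in>Inj 3 n. (\<lambda>a b c. \<Sum>l\<in>{..<n} - {a, b, c}. f a b c l) (\<sigma> 0) (\<sigma> 1) (\<sigma> 2))"
  proof (rule sum.cong[OF refl])
    fix \<sigma> :: "nat \<Rightarrow> nat"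
    have "\<sigma> ` {..<3} = {\<sigma> 0, \<sigma> 1, \<sigma> 2}" by (auto simp: numeral_3_eq_3 numeral_2_eq_2 lessThan_Suc)
    then show "(\<Sum>l\<in>{..<n} - \<sigma> ` {..<3}. f ((\<sigma>(3 := l)) 0) ((\<sigma>(3 := l)) 1) ((\<sigma>(3 := l)) 2) ((\<sigma>(3 := l)) 3)) =
       (\<lambda>a b c. \<Sum>l\<in>{..<n} - {a, b, c}. f a b c l) (\<sigma> 0) (\<sigma> 1) (\<sigma> 2)" by simp
  qed
  also have "\<dots> = (\<Sum>i<n. \<Sum>j\<in>{..<n} - {i}. \<Sum>k\<in>{..<n} - {i, j}. \<Sum>l\<in>{..<n} - {i, j, k}. f i j k l)" by (rule Inj3_sum)
  finally show ?thesis unfolding e .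
qed

lemma offd: "(\<Sum>j<(n::nat). if i \<noteq> j then a j else 0) = (\<Sum>j\<in>{..<n} - {i}. (a j :: real))"
proof -
  have "(\<Sum>j<n. if i \<noteq> j then a j else 0) = (\<Sum>j\<in>{..<n} \<inter> {j. i \<noteq> j}. a j) + (\<Sum>j\<in>{..<n} \<inter> - {j. i \<noteq> j}. 0)"
    by (rule sum.If_cases) simp
  also have "{..<n} \<inter> {j. i \<noteq> j} = {..<n} - {i}" by auto
  finally show ?thesis by simp
qed

lemma swap_ij: "(\<Sum>i<(n::nat). \<Sum>j\<in>{..<n} - {i}. F i j) = (\<Sum>i<n. \<Sum>j\<in>{..<n} - {i}. (F j i :: real))"
proof -
  have "(\<Sum>i<n. \<Sum>j\<in>{..<n} - {i}. F i j) = (\<Sum>i<n. \<Sum>j<n. if i \<noteq> j then F i j else 0)"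
    by (simp add: offd)
  also have "\<dots> = (\<Sum>j<n. \<Sum>i<n. if i \<noteq> j then F i j else 0)" by (rule sum.swap)
  also have "\<dots> = (\<Sum>j<n. \<Sum>i<n. if j \<noteq> i then F i j else 0)" by (intro sum.cong refl) auto
  also have "\<dots> = (\<Sum>i<n. \<Sum>j\<in>{..<n} - {i}. F j i)" by (simp add: offd)
  finally show ?thesis .
qed

lemma Nc_alt: "Nc n xs = 1/2 * (\<Sum>i<n. \<Sum>j\<in>{..<n} - {i}. ind (xs i) (xs j))"
  unfolding Nc_def by (simp add: offd)

lemma S_expand:
  fixes I :: "nat \<Rightarrow> nat \<Rightarrow> real" and n :: nat
  assumes sym: "\<And>a b. I a b = I b a" and ij: "i < n" "j < n" "i \<noteq> j"
  defines "R \<equiv> {..<n} - {i, j}"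
  shows "(\<Sum>k<n. \<Sum>l\<in>{..<n} - {k}. I k l) = 2 * I i j + (\<Sum>l\<in>R. I i l) + (\<Sum>l\<in>R. I j l)
     + (\<Sum>k\<in>R. I k i) + (\<Sum>k\<in>R. I k j) + (\<Sum>k\<in>R. \<Sum>l\<in>{..<n} - {i, j, k}. I k l)"
proof -
  let ?F = "\<lambda>k. \<Sum>l\<in>{..<n} - {k}. I k l"
  have U: "{..<n} = insert i (insert j R)" using ij by (auto simp: R_def)
  have nR: "i \<notin> R" "j \<notin> R" by (auto simp: R_def)
  have fR: "finite R" by (simp add: R_def)
  have "(\<Sum>k<n. ?F k) = sum ?F (insert i (insert j R))" using U by (rule arg_cong)
  also have "\<dots> = ?F i + sum ?F (insert j R)"
    by (rule sum.insert) (use fR nR ij in auto)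
  also have "sum ?F (insert j R) = ?F j + sum ?F R"
    by (rule sum.insert) (use fR nR in auto)
  finally have s0: "(\<Sum>k<n. ?F k) = ?F i + (?F j + (\<Sum>k\<in>R. ?F k))" .
  moreover note s0
  moreover have "?F i = I i j + (\<Sum>l\<in>R. I i l)"
  proof -
    have "{..<n} - {i} = insert j R" using ij by (auto simp: R_def)
    then show ?thesis using nR fR by simp
  qed
  moreover have "?F j = I i j + (\<Sum>l\<in>R. I j l)"
  proof -
    have "{..<n} - {j} = insert i R" using ij by (auto simp: R_def)
    then show ?thesis using nR fR sym[of j i] by simp
  qed
  moreover have "(\<Sum>k\<in>R. ?F k) = (\<Sum>k\<in>R. I k i + I k j + (\<Sum>l\<in>{..<n} - {i, j, k}. I k l))"
  proof (rule sum.cong[OF refl])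
    fix k assume k: "k \<in> R"
    define X where "X = {..<n} - {i, j, k}"
    have e: "{..<n} - {k} = insert i (insert j X)" using ij k by (auto simp: R_def X_def)
    have a: "i \<notin> insert j X" "j \<notin> X" "finite X" using ij by (auto simp: X_def)
    have "?F k = (\<Sum>l\<in>insert i (insert j X). I k l)" by (simp only: e)
    also have "\<dots> = I k i + (\<Sum>l\<in>insert j X. I k l)" by (rule sum.insert) (use a in auto)
    also have "(\<Sum>l\<in>insert j X. I k l) = I k j + (\<Sum>l\<in>X. I k l)" by (rule sum.insert) (use a in auto)
    finally show "?F k = I k i + I k j + (\<Sum>l\<in>{..<n} - {i, j, k}. I k l)" unfolding X_def by simp
  qed
  moreover have "(\<Sum>k\<in>R. I k i + I k j + (\<Sum>l\<in>{..<n} - {i, j, k}. I k l)) =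
     (\<Sum>k\<in>R. I k i) + (\<Sum>k\<in>R. I k j) + (\<Sum>k\<in>R. \<Sum>l\<in>{..<n} - {i, j, k}. I k l)"
    by (simp only: sum.distrib)
  ultimately show ?thesis by linarith
qed

lemma Nc_sq_comb:
  fixes I :: "nat \<Rightarrow> nat \<Rightarrow> real" and n :: nat
  assumes sym: "\<And>a b. I a b = I b a" and sq: "\<And>a b. I a b * I a b = I a b"
  defines "S \<equiv> (\<Sum>i<n. \<Sum>j\<in>{..<n} - {i}. I i j)"
  shows "S * S = 2 * S + 4 * (\<Sum>i<n. \<Sum>j\<in>{..<n} - {i}. \<Sum>k\<in>{..<n} - {i, j}. I i j * I k i)
     + (\<Sum>i<n. \<Sum>j\<in>{..<n} - {i}. \<Sum>k\<in>{..<n} - {i, j}. \<Sum>l\<in>{..<n} - {i, j, k}. I i j * I k l)"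
proof -
  let ?Q3 = "\<Sum>i<n. \<Sum>j\<in>{..<n} - {i}. \<Sum>k\<in>{..<n} - {i, j}. I i j * I k i"
  let ?Q4 = "\<Sum>i<n. \<Sum>j\<in>{..<n} - {i}. \<Sum>k\<in>{..<n} - {i, j}. \<Sum>l\<in>{..<n} - {i, j, k}. I i j * I k l"
  let ?A = "\<Sum>i<n. \<Sum>j\<in>{..<n} - {i}. \<Sum>k\<in>{..<n} - {i, j}. I i j * I j k"
  let ?B = "\<Sum>i<n. \<Sum>j\<in>{..<n} - {i}. \<Sum>k\<in>{..<n} - {i, j}. I i j * I k j"
  have "S * S = (\<Sum>i<n. \<Sum>j\<in>{..<n} - {i}. I i j) * S"
    unfolding S_def by (rule refl)
  also have "\<dots> = (\<Sum>i<n. \<Sum>j\<in>{..<n} - {i}. I i j * S)"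
    by (simp only: sum_distrib_right)
  also have "\<dots> = (\<Sum>i<n. \<Sum>j\<in>{..<n} - {i}. 2 * I i j + (\<Sum>k\<in>{..<n} - {i, j}. I i j * I k i)
      + (\<Sum>k\<in>{..<n} - {i, j}. I i j * I j k) + (\<Sum>k\<in>{..<n} - {i, j}. I i j * I k i)
      + (\<Sum>k\<in>{..<n} - {i, j}. I i j * I k j) + (\<Sum>k\<in>{..<n} - {i, j}. \<Sum>l\<in>{..<n} - {i, j, k}. I i j * I k l))"
  proof (intro sum.cong refl)
    fix i j assume i: "i \<in> {..<n}" and j: "j \<in> {..<n} - {i}"
    define R where "R = {..<n} - {i, j}"
    define x where "x = I i j"
    define A where "A = (\<Sum>l\<in>R. I l i)"
    define B where "B = (\<Sum>l\<in>R. I j l)"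
    define C where "C = (\<Sum>l\<in>R. I l j)"
    define D where "D = (\<Sum>k\<in>R. \<Sum>l\<in>{..<n} - {i, j, k}. I k l)"
    have "S = 2 * I i j + (\<Sum>l\<in>R. I i l) + (\<Sum>l\<in>R. I j l)
     + (\<Sum>k\<in>R. I k i) + (\<Sum>k\<in>R. I k j) + (\<Sum>k\<in>R. \<Sum>l\<in>{..<n} - {i, j, k}. I k l)"
      unfolding S_def R_def using S_expand[OF sym, of i n j] i j by simp
    moreover have "(\<Sum>l\<in>R. I i l) = A" unfolding A_def by (intro sum.cong refl) (rule sym)
    ultimately have Seq: "S = 2 * x + A + B + A + C + D" unfolding x_def A_def B_def C_def D_def by simp
    have e1: "(\<Sum>k\<in>{..<n} - {i, j}. x * I k i) = x * A" unfolding x_def A_def R_def by (simp add: sum_distrib_left)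
    have e2: "(\<Sum>k\<in>{..<n} - {i, j}. x * I j k) = x * B" unfolding x_def B_def R_def by (simp add: sum_distrib_left)
    have e3: "(\<Sum>k\<in>{..<n} - {i, j}. x * I k j) = x * C" unfolding x_def C_def R_def by (simp add: sum_distrib_left)
    have e4: "(\<Sum>k\<in>{..<n} - {i, j}. \<Sum>l\<in>{..<n} - {i, j, k}. x * I k l) = x * D"
      unfolding x_def D_def R_def by (simp add: sum_distrib_left)
    have xx: "x * x = x" unfolding x_def by (rule sq)
    have x2x: "x * (2 * x) = 2 * x" using xx by (simp add: mult.left_commute)
    show "I i j * S = 2 * I i j + (\<Sum>k\<in>{..<n} - {i, j}. I i j * I k i)
      + (\<Sum>k\<in>{..<n} - {i, j}. I i j * I j k) + (\<Sum>k\<in>{..<n} - {i, j}. I i j * I k i)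
      + (\<Sum>k\<in>{..<n} - {i, j}. I i j * I k j) + (\<Sum>k\<in>{..<n} - {i, j}. \<Sum>l\<in>{..<n} - {i, j, k}. I i j * I k l)"
      unfolding x_def[symmetric] unfolding e1 e2 e3 e4 Seq distrib_left x2x by simp
  qed
  also have "\<dots> = (\<Sum>i<n. \<Sum>j\<in>{..<n} - {i}. 2 * I i j) + ?Q3 + ?A + ?Q3 + ?B + ?Q4"
    by (simp only: sum.distrib)
  also have "(\<Sum>i<n. \<Sum>j\<in>{..<n} - {i}. 2 * I i j) = 2 * S"
    unfolding S_def by (simp add: sum_distrib_left)
  also have "?A = ?Q3"
  proof -
    have "?A = (\<Sum>i<n. \<Sum>j\<in>{..<n} - {i}. \<Sum>k\<in>{..<n} - {j, i}. I j i * I i k)"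
      by (rule swap_ij)
    also have "\<dots> = ?Q3"
    proof -
      have pt: "(\<Sum>k\<in>{..<n} - {j, i}. I j i * I i k) = (\<Sum>k\<in>{..<n} - {i, j}. I i j * I k i)" for i j
      proof -
        have s: "{..<n} - {j, i} = {..<n} - {i, j}" by auto
        show ?thesis unfolding s by (intro sum.cong refl) (metis sym)
      qed
      show ?thesis by (simp only: pt)
    qed
    finally show ?thesis .
  qed
  also have "?B = ?Q3"
  proof -
    have "?B = (\<Sum>i<n. \<Sum>j\<in>{..<n} - {i}. \<Sum>k\<in>{..<n} - {j, i}. I j i * I k i)"
      by (rule swap_ij)
    also have "\<dots> = ?Q3"
    proof -
      have pt: "(\<Sum>k\<in>{..<n} - {j, i}. I j i * I k i) = (\<Sum>k\<in>{..<n} - {i, j}. I i j * I k i)" for i j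
      proof -
        have s: "{..<n} - {j, i} = {..<n} - {i, j}" by auto
        show ?thesis unfolding s by (intro sum.cong refl) (metis sym)
      qed
      show ?thesis by (simp only: pt)
    qed
    finally show ?thesis .
  qed
  finally show ?thesis by simp
qed

lemma lam_base_sets:
  assumes "sets Q = sets borel" "sets V = sets borel"
  shows "sets (lborel \<Otimes>\<^sub>M (Q \<Otimes>\<^sub>M V)) = sets (borel :: segment measure)"
proof -
  have "sets (lborel \<Otimes>\<^sub>M (Q \<Otimes>\<^sub>M V)) = sets ((borel :: (real \<times> real) measure) \<Otimes>\<^sub>M ((borel :: real measure) \<Otimes>\<^sub>M (borel :: real measure)))"
    by (intro sets_pair_measure_cong) (simp_all add: assms)
  also have "\<dots> = sets (borel :: segment measure)"
  proof -
    have e1: "((borel :: real measure) \<Otimes>\<^sub>M (borel :: real measure)) = borel" by (rule borel_prod)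
    have e2: "((borel :: (real \<times> real) measure) \<Otimes>\<^sub>M (borel :: (real \<times> real) measure)) = borel" by (rule borel_prod)
    show ?thesis by (simp only: e1 e2)
  qed
  finally show ?thesis .
qed

lemma lam_facts:
  fixes B :: "(real \<times> real) set" and b :: real and \<rho> :: "real \<times> real \<Rightarrow> real"
    and Q V :: "real measure"
  assumes B: "B \<in> sets lborel" "bounded B"
    and b: "b > 0"
    and \<rho>: "\<rho> \<in> borel_measurable borel" "\<And>z. \<rho> z \<ge> 0" "\<exists>C. \<forall>z\<in>B. \<rho> z \<le> C"
    and Q: "prob_space Q" "sets Q = sets borel"
    and V: "prob_space V" "sets V = sets borel"
  shows "finite_measure (intensity B b \<rho> Q V) \<and> sets (intensity B b \<rho> Q V) = sets borel
     \<and> emeasure (intensity B b \<rho> Q V) (UNIV - Gd b) = 0"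
proof -
  let ?M = "(lborel :: (real \<times> real) measure) \<Otimes>\<^sub>M (Q \<Otimes>\<^sub>M V)"
  let ?f = "\<lambda>y. indicator (segY B b) y * ennreal (\<rho> (fst y))"
  have sM: "sets ?M = sets borel" by (rule lam_base_sets[OF Q(2) V(2)])
  have spQV: "space (Q \<Otimes>\<^sub>M V) = UNIV"
    using sets_eq_imp_space_eq[OF Q(2)] sets_eq_imp_space_eq[OF V(2)] by (simp add: space_pair_measure)
  have segs: "segY B b \<in> sets ?M"
    unfolding segY_def using B(1) Q(2) V(2) by (intro pair_measureI) auto
  have rm: "\<rho> \<in> borel_measurable lborel" using \<rho>(1) by simp
  have fm: "?f \<in> borel_measurable ?M"
    by (intro borel_measurable_times_ennreal borel_measurable_indicator segs
        measurable_compose[OF measurable_fst rm] measurable_compose[OF _ measurable_ennreal]) 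
  have sets_eq: "sets (intensity B b \<rho> Q V) = sets borel"
    unfolding intensity_def using sM by simp
  have Gds: "UNIV - Gd b \<in> sets ?M"
  proof -
    have "len -` {0..b} \<inter> space borel \<in> sets borel"
      by (rule measurable_sets[OF borel_len]) auto
    then have "Gd b \<in> sets borel" by (simp add: Gd_def vimage_def)
    then show ?thesis using sM by (metis sets.compl_sets sets_eq_imp_space_eq space_borel)
  qed
  have "emeasure (intensity B b \<rho> Q V) (UNIV - Gd b) = (\<integral>\<^sup>+ x. ?f x * indicator (UNIV - Gd b) x \<partial>?M)"
    unfolding intensity_def by (rule emeasure_density[OF fm Gds])
  also have "\<dots> = (\<integral>\<^sup>+ x. 0 \<partial>?M)"
  proof (rule nn_integral_cong)
    fix x
    show "?f x * indicator (UNIV - Gd b) x = 0"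
    proof (cases "x \<in> segY B b")
      case True
      then have "x \<in> Gd b" by (auto simp: segY_def Gd_def len_def)
      then show ?thesis by simp
    qed simp
  qed
  finally have null: "emeasure (intensity B b \<rho> Q V) (UNIV - Gd b) = 0" by simp
  obtain C where C: "\<forall>z\<in>B. \<rho> z \<le> C" using \<rho>(3) by blast
  define C' where "C' = max C 0"
  have spM: "space ?M \<in> sets ?M" by (rule sets.top)
  have BS: "B \<times> space (Q \<Otimes>\<^sub>M V) \<in> sets ?M" using B(1) by (intro pair_measureI) auto
  have "emeasure (intensity B b \<rho> Q V) (space (intensity B b \<rho> Q V)) = (\<integral>\<^sup>+ x. ?f x * indicator (space ?M) x \<partial>?M)"
    unfolding intensity_def by (simp add: emeasure_density[OF fm spM])
  also have "\<dots> \<le> (\<integral>\<^sup>+ x. ennreal C' * indicator (B \<times> space (Q \<Otimes>\<^sub>M V)) x \<partial>?M)"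
  proof (rule nn_integral_mono)
    fix x
    show "?f x * indicator (space ?M) x \<le> ennreal C' * indicator (B \<times> space (Q \<Otimes>\<^sub>M V)) x"
    proof (cases "x \<in> segY B b")
      case True
      then have "fst x \<in> B" by (auto simp: segY_def)
      then have "\<rho> (fst x) \<le> C'" using C by (auto simp: C'_def)
      moreover have "x \<in> B \<times> space (Q \<Otimes>\<^sub>M V)" using \<open>fst x \<in> B\<close> spQV by (cases x) auto
      ultimately show ?thesis using True by (auto simp: indicator_def intro: ennreal_leI)
    qed simp
  qed
  also have "\<dots> = ennreal C' * emeasure ?M (B \<times> space (Q \<Otimes>\<^sub>M V))"
    by (rule nn_integral_cmult_indicator[OF BS])
  also have "emeasure ?M (B \<times> space (Q \<Otimes>\<^sub>M V)) = emeasure lborel B * emeasure (Q \<Otimes>\<^sub>M V) (space (Q \<Otimes>\<^sub>M V))"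
  proof -
    interpret QV: prob_space "Q \<Otimes>\<^sub>M V" by (rule prob_space_pair[OF Q(1) V(1)])
    show ?thesis using B(1) by (intro QV.emeasure_pair_measure_Times) auto
  qed
  also have "emeasure (Q \<Otimes>\<^sub>M V) (space (Q \<Otimes>\<^sub>M V)) = 1"
    using prob_space_pair[OF Q(1) V(1)] by (rule prob_space.emeasure_space_1)
  finally have le: "emeasure (intensity B b \<rho> Q V) (space (intensity B b \<rho> Q V)) \<le> ennreal C' * emeasure lborel B" by simp
  have "emeasure lborel B < \<infinity>" by (rule emeasure_bounded_finite[OF B(2)])
  then have "ennreal C' * emeasure lborel B < \<infinity>" by (simp add: ennreal_mult_less_top)
  then have "emeasure (intensity B b \<rho> Q V) (space (intensity B b \<rho> Q V)) \<noteq> \<infinity>" using le by (auto simp: top_unique)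
  then have "finite_measure (intensity B b \<rho> Q V)" by (rule finite_measureI)
  with sets_eq null show ?thesis by simp
qed

lemma cLc: "Lc n xs = (\<Sum>\<sigma>\<in>Inj 1 n. len (xs (\<sigma> 0)))"
  unfolding Lc_def using Inj1_sum[of "\<lambda>a. len (xs a)" n] by simp

lemma cNc: "Nc n xs = (\<Sum>\<sigma>\<in>Inj 2 n. 1/2 * ind (xs (\<sigma> 0)) (xs (\<sigma> 1)))"
  using Inj2_sum[of "\<lambda>a b. 1/2 * ind (xs a) (xs b)" n] by (simp add: Nc_alt sum_distrib_left)

lemma cL2: "(Lc n xs)\<^sup>2 = (\<Sum>\<sigma>\<in>Inj 1 n. (len (xs (\<sigma> 0)))\<^sup>2) + (\<Sum>\<sigma>\<in>Inj 2 n. len (xs (\<sigma> 0)) * len (xs (\<sigma> 1)))"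
proof -
  have "(Lc n xs)\<^sup>2 = (\<Sum>i<n. \<Sum>j<n. len (xs i) * len (xs j))" unfolding Lc_def power2_eq_square by (rule sum_product)
  also have "\<dots> = (\<Sum>i<n. len (xs i) * len (xs i) + (\<Sum>j\<in>{..<n}-{i}. len (xs i) * len (xs j)))"
    by (intro sum.cong refl) (rule sum.remove, auto)
  also have "\<dots> = (\<Sum>i<n. (len (xs i))\<^sup>2) + (\<Sum>i<n. \<Sum>j\<in>{..<n}-{i}. len (xs i) * len (xs j))"
    by (simp add: sum.distrib power2_eq_square)
  finally show ?thesis using Inj1_sum[of "\<lambda>a. (len (xs a))\<^sup>2" n] Inj2_sum[of "\<lambda>a b. len (xs a) * len (xs b)" n] by simp
qed

lemma cN2: "(Nc n xs)\<^sup>2 = (\<Sum>\<sigma>\<in>Inj 2 n. 1/2 * ind (xs (\<sigma> 0)) (xs (\<sigma> 1)))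
   + (\<Sum>\<sigma>\<in>Inj 3 n. ind (xs (\<sigma> 0)) (xs (\<sigma> 1)) * ind (xs (\<sigma> 2)) (xs (\<sigma> 0)))
   + (\<Sum>\<sigma>\<in>Inj 4 n. 1/4 * (ind (xs (\<sigma> 0)) (xs (\<sigma> 1)) * ind (xs (\<sigma> 2)) (xs (\<sigma> 3))))"
proof -
  define I where "I a b = ind (xs a) (xs b)" for a b
  define S where "S = (\<Sum>i<n. \<Sum>j\<in>{..<n} - {i}. I i j)"
  define Q3 where "Q3 = (\<Sum>i<n. \<Sum>j\<in>{..<n} - {i}. \<Sum>k\<in>{..<n} - {i, j}. I i j * I k i)"
  define Q4 where "Q4 = (\<Sum>i<n. \<Sum>j\<in>{..<n} - {i}. \<Sum>k\<in>{..<n} - {i, j}. \<Sum>l\<in>{..<n} - {i, j, k}. I i j * I k l)"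
  have comb: "S * S = 2 * S + 4 * Q3 + Q4"
    unfolding S_def Q3_def Q4_def by (rule Nc_sq_comb) (simp_all add: I_def ind_sym ind_sq)
  have N: "Nc n xs = 1/2 * S" unfolding S_def I_def by (rule Nc_alt)
  have e2: "(\<Sum>\<sigma>\<in>Inj 2 n. 1/2 * ind (xs (\<sigma> 0)) (xs (\<sigma> 1))) = 1/2 * S"
    using Inj2_sum[of "\<lambda>a b. 1/2 * ind (xs a) (xs b)" n] by (simp add: S_def I_def sum_distrib_left)
  have e3: "(\<Sum>\<sigma>\<in>Inj 3 n. ind (xs (\<sigma> 0)) (xs (\<sigma> 1)) * ind (xs (\<sigma> 2)) (xs (\<sigma> 0))) = Q3"
    using Inj3_sum[of "\<lambda>a b c. ind (xs a) (xs b) * ind (xs c) (xs a)" n] by (simp add: Q3_def I_def)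
  have e4: "(\<Sum>\<sigma>\<in>Inj 4 n. 1/4 * (ind (xs (\<sigma> 0)) (xs (\<sigma> 1)) * ind (xs (\<sigma> 2)) (xs (\<sigma> 3)))) = 1/4 * Q4"
    using Inj4_sum[of "\<lambda>a b c d. 1/4 * (ind (xs a) (xs b) * ind (xs c) (xs d))" n]
    by (simp add: Q4_def I_def sum_distrib_left)
  have "(Nc n xs)\<^sup>2 = S * S / 4" unfolding N power2_eq_square by simp
  also have "\<dots> = 1/2 * S + Q3 + 1/4 * Q4" unfolding comb by simp
  finally show ?thesis unfolding e2 e3 e4 .
qed

lemma Gd_len: "y \<in> Gd b \<Longrightarrow> \<bar>len y\<bar> \<le> b" by (auto simp: Gd_def)

lemma abs_ind: "\<bar>ind a c\<bar> \<le> 1" by (simp add: ind_def)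

lemma mk_gsetup:
  fixes m :: nat and g :: "(nat \<Rightarrow> segment) \<Rightarrow> real"
  assumes "segsetup lam bb \<nu>2" "g \<in> borel_measurable (PiM {..<m} (\<lambda>_. lam))"
    "\<And>ys. (\<And>i. i < m \<Longrightarrow> ys i \<in> Gd bb) \<Longrightarrow> \<bar>g ys\<bar> \<le> Cg"
    "\<And>ys ys'. (\<And>i. i < m \<Longrightarrow> ys i = ys' i) \<Longrightarrow> g ys = g ys'" "0 \<le> Cg"
  shows "gsetup lam bb \<nu>2 m g Cg"
proof -
  have "\<forall>ys. (\<forall>i<m. ys i \<in> Gd bb) \<longrightarrow> \<bar>g ys\<bar> \<le> Cg" using assms(3) by blast
  moreover have "\<forall>ys ys'. (\<forall>i<m. ys i = ys' i) \<longrightarrow> g ys = g ys'" using assms(4) by blast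
  ultimately show ?thesis unfolding gsetup_def gsetup_axioms_def using assms(1,2,5) by blast
qed

theorem corollary2:
  fixes B :: "(real \<times> real) set" and b :: real and \<rho> :: "real \<times> real \<Rightarrow> real"
    and Q V :: "real measure" and \<nu>1 \<nu>2 :: real
  assumes B: "B \<in> sets lborel" "bounded B" "emeasure lborel B > 0"
    and b: "b > 0"
    and \<rho>: "\<rho> \<in> borel_measurable borel" "\<And>z. \<rho> z \<ge> 0" "\<exists>C. \<forall>z\<in>B. \<rho> z \<le> C"
    and Q: "prob_space Q" "sets Q = sets borel" "emeasure Q {0<..b} = 1"
    and V: "prob_space V" "sets V = sets borel" "emeasure V {0..<pi} = 1"
    and V_nondeg: "\<And>a. emeasure V {a} < 1"
    and \<nu>2: "\<nu>2 \<le> 0"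
  defines "lam \<equiv> intensity B b \<rho> Q V"
  defines "EE \<equiv> gibbs_expect lam \<nu>1 \<nu>2"
  defines "lamn \<equiv> (\<lambda>m. PiM {..<m} (\<lambda>_. lam))"
  shows
    "EE Lc = (\<integral>y. EE (\<lambda>n xs. calE \<nu>1 \<nu>2 n xs 1 (\<lambda>_. y)) * len y \<partial>lam) \<and>
     EE Nc = 1/2 * (\<integral>ys. EE (\<lambda>n xs. calE \<nu>1 \<nu>2 n xs 2 ys) * ind (ys 0) (ys 1) \<partial>lamn 2) \<and>
     EE (\<lambda>n xs. (Lc n xs)\<^sup>2) =
       (\<integral>y. EE (\<lambda>n xs. calE \<nu>1 \<nu>2 n xs 1 (\<lambda>_. y)) * (len y)\<^sup>2 \<partial>lam)
     + (\<integral>ys. EE (\<lambda>n xs. calE \<nu>1 \<nu>2 n xs 2 ys) * len (ys 0) * len (ys 1) \<partial>lamn 2) \<and>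
     EE (\<lambda>n xs. (Nc n xs)\<^sup>2) =
       1/2 * (\<integral>ys. EE (\<lambda>n xs. calE \<nu>1 \<nu>2 n xs 2 ys) * ind (ys 0) (ys 1) \<partial>lamn 2)
     + (\<integral>ys. EE (\<lambda>n xs. calE \<nu>1 \<nu>2 n xs 3 ys) * ind (ys 0) (ys 1) * ind (ys 2) (ys 0) \<partial>lamn 3)
     + 1/4 * (\<integral>ys. EE (\<lambda>n xs. calE \<nu>1 \<nu>2 n xs 4 ys) * ind (ys 0) (ys 1) * ind (ys 2) (ys 3) \<partial>lamn 4)"
proof -
  have lf: "finite_measure lam \<and> sets lam = sets borel \<and> emeasure lam (UNIV - Gd b) = 0"
    unfolding lam_def by (rule lam_facts[OF B(1,2) b \<rho> Q(1,2) V(1,2)])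
  have b0: "0 \<le> b" using b by simp
  have segS: "segsetup lam b \<nu>2" unfolding segsetup_def using lf \<nu>2 b0 by auto
  interpret S: segsetup lam b \<nu>1 \<nu>2 by (rule segS)
  have cm: "\<And>i m. i < m \<Longrightarrow> (\<lambda>ys. ys i) \<in> measurable (S.P m) lam"
    using S.comp_m[OF _ measurable_ident_sets[OF refl]] by simp
  have lenabs: "\<And>y. y \<in> Gd b \<Longrightarrow> \<bar>len y\<bar> \<le> b" by (rule Gd_len)
  have bb: "b * b = b\<^sup>2" by (simp add: power2_eq_square)

  have "gsetup lam b \<nu>2 1 (\<lambda>ys. len (ys 0)) b"
  proof (rule mk_gsetup[OF segS _ _ _ b0])
    show "(\<lambda>ys. len (ys 0)) \<in> borel_measurable (S.P 1)" by (intro S.len_m cm) simp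
    show "\<bar>len (ys 0)\<bar> \<le> b" if "\<And>i. i < 1 \<Longrightarrow> ys i \<in> Gd b" for ys :: "nat \<Rightarrow> segment" by (intro lenabs that) simp
  qed simp
  then interpret g1: gsetup lam b \<nu>1 \<nu>2 1 "\<lambda>ys. len (ys 0)" b .

  have "gsetup lam b \<nu>2 1 (\<lambda>ys. (len (ys 0))\<^sup>2) (b\<^sup>2)"
  proof (rule mk_gsetup[OF segS])
    show "(\<lambda>ys. (len (ys 0))\<^sup>2) \<in> borel_measurable (S.P 1)" by (intro borel_measurable_power S.len_m cm) simp
    show "\<bar>(len (ys 0))\<^sup>2\<bar> \<le> b\<^sup>2" if "\<And>i. i < 1 \<Longrightarrow> ys i \<in> Gd b" for ys :: "nat \<Rightarrow> segment"
    proof -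
      have "\<bar>len (ys 0)\<bar> \<le> b" by (intro lenabs that) simp
      from power_mono[OF this abs_ge_zero, of 2] show ?thesis by simp
    qed
  qed simp_all
  then interpret g1s: gsetup lam b \<nu>1 \<nu>2 1 "\<lambda>ys. (len (ys 0))\<^sup>2" "b\<^sup>2" .

  have "gsetup lam b \<nu>2 2 (\<lambda>ys. len (ys 0) * len (ys 1)) (b\<^sup>2)"
  proof (rule mk_gsetup[OF segS])
    show "(\<lambda>ys. len (ys 0) * len (ys 1)) \<in> borel_measurable (S.P 2)" by (intro borel_measurable_times S.len_m cm) simp_all
    show "\<bar>len (ys 0) * len (ys 1)\<bar> \<le> b\<^sup>2" if "\<And>i. i < 2 \<Longrightarrow> ys i \<in> Gd b" for ys :: "nat \<Rightarrow> segment"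
    proof -
      have "\<bar>len (ys 0)\<bar> \<le> b" "\<bar>len (ys 1)\<bar> \<le> b" by (intro lenabs that, simp)+
      then show ?thesis unfolding abs_mult bb[symmetric] by (intro mult_mono) auto
    qed
  qed simp_all
  then interpret g2L: gsetup lam b \<nu>1 \<nu>2 2 "\<lambda>ys. len (ys 0) * len (ys 1)" "b\<^sup>2" .

  have "gsetup lam b \<nu>2 2 (\<lambda>ys. 1/2 * ind (ys 0) (ys 1)) 1"
  proof (rule mk_gsetup[OF segS])
    show "(\<lambda>ys. 1/2 * ind (ys 0) (ys 1)) \<in> borel_measurable (S.P 2)" by (intro borel_measurable_times borel_measurable_const S.ind_m cm) simp_all
    show "\<bar>1/2 * ind (ys 0) (ys 1)\<bar> \<le> 1" for ys :: "nat \<Rightarrow> segment" by (simp add: ind_def)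
  qed simp_all
  then interpret g2N: gsetup lam b \<nu>1 \<nu>2 2 "\<lambda>ys. 1/2 * ind (ys 0) (ys 1)" 1 .

  have "gsetup lam b \<nu>2 3 (\<lambda>ys. ind (ys 0) (ys 1) * ind (ys 2) (ys 0)) 1"
  proof (rule mk_gsetup[OF segS])
    show "(\<lambda>ys. ind (ys 0) (ys 1) * ind (ys 2) (ys 0)) \<in> borel_measurable (S.P 3)" by (intro borel_measurable_times S.ind_m cm) simp_all
    show "\<bar>ind (ys 0) (ys 1) * ind (ys 2) (ys 0)\<bar> \<le> 1" for ys :: "nat \<Rightarrow> segment" by (simp add: ind_def)
  qed simp_all
  then interpret g3: gsetup lam b \<nu>1 \<nu>2 3 "\<lambda>ys. ind (ys 0) (ys 1) * ind (ys 2) (ys 0)" 1 .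

  have "gsetup lam b \<nu>2 4 (\<lambda>ys. 1/4 * (ind (ys 0) (ys 1) * ind (ys 2) (ys 3))) 1"
  proof (rule mk_gsetup[OF segS])
    show "(\<lambda>ys. 1/4 * (ind (ys 0) (ys 1) * ind (ys 2) (ys 3))) \<in> borel_measurable (S.P 4)"
      by (intro borel_measurable_times borel_measurable_const S.ind_m cm) simp_all
    show "\<bar>1/4 * (ind (ys 0) (ys 1) * ind (ys 2) (ys 3))\<bar> \<le> 1" for ys :: "nat \<Rightarrow> segment" by (simp add: ind_def)
  qed simp_all
  then interpret g4: gsetup lam b \<nu>1 \<nu>2 4 "\<lambda>ys. 1/4 * (ind (ys 0) (ys 1) * ind (ys 2) (ys 3))" 1 .

  have EEf: "\<And>F. EE F = poisson_expect lam (\<lambda>n xs. F n xs * Gexp \<nu>1 \<nu>2 n xs) / poisson_expect lam (Gexp \<nu>1 \<nu>2)"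
    unfolding EE_def gibbs_expect_def by simp
  define PG where "PG = poisson_expect lam (Gexp \<nu>1 \<nu>2)"
  define PE where "PE = (\<lambda>m ys. poisson_expect lam (\<lambda>n xs. calE \<nu>1 \<nu>2 n xs m ys * Gexp \<nu>1 \<nu>2 n xs))"
  have EEc: "\<And>m ys. EE (\<lambda>n xs. calE \<nu>1 \<nu>2 n xs m ys) = PE m ys / PG" unfolding EEf PE_def PG_def by simp
  have icong: "\<And>M f g. (\<And>x. f x = g x) \<Longrightarrow> (\<integral>x. f x \<partial>M) = (\<integral>x. (g x :: real) \<partial>M)" by simp
  have DC: "\<And>m g. (\<integral>ys. g ys * PE m ys \<partial>S.P m) / PG = (\<integral>ys. EE (\<lambda>n xs. calE \<nu>1 \<nu>2 n xs m ys) * g ys \<partial>S.P m)"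
  proof -
    fix m and g :: "(nat \<Rightarrow> segment) \<Rightarrow> real"
    have "(\<integral>ys. EE (\<lambda>n xs. calE \<nu>1 \<nu>2 n xs m ys) * g ys \<partial>S.P m) = (\<integral>ys. g ys * PE m ys / PG \<partial>S.P m)"
      unfolding EEc by (rule icong) simp
    also have "\<dots> = (\<integral>ys. g ys * PE m ys \<partial>S.P m) / PG" by (rule integral_divide_zero)
    finally show "(\<integral>ys. g ys * PE m ys \<partial>S.P m) / PG = (\<integral>ys. EE (\<lambda>n xs. calE \<nu>1 \<nu>2 n xs m ys) * g ys \<partial>S.P m)" by simp
  qed
  have lamn: "\<And>m. lamn m = S.P m" unfolding lamn_def by simp
  have PEm1: "(\<lambda>ys. PE 1 ys) \<in> borel_measurable (S.P 1)" unfolding PE_def by (rule g1.PEc_m)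
  have ce1: "\<And>ys. EE (\<lambda>n xs. calE \<nu>1 \<nu>2 n xs 1 ys) = EE (\<lambda>n xs. calE \<nu>1 \<nu>2 n xs 1 (\<lambda>_. ys 0))"
    by (rule arg_cong[where f=EE], intro ext calE_cong) auto
  have P1c: "\<And>f. f \<in> borel_measurable lam \<Longrightarrow> (\<integral>ys. EE (\<lambda>n xs. calE \<nu>1 \<nu>2 n xs 1 ys) * f (ys 0) \<partial>S.P 1) = (\<integral>y. EE (\<lambda>n xs. calE \<nu>1 \<nu>2 n xs 1 (\<lambda>_. y)) * f y \<partial>lam)"
  proof -
    fix f :: "segment \<Rightarrow> real" assume fm: "f \<in> borel_measurable lam"
    show "(\<integral>ys. EE (\<lambda>n xs. calE \<nu>1 \<nu>2 n xs 1 ys) * f (ys 0) \<partial>S.P 1) = (\<integral>y. EE (\<lambda>n xs. calE \<nu>1 \<nu>2 n xs 1 (\<lambda>_. y)) * f y \<partial>lam)"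
    proof (rule S.P1_int[where \<Phi>'="\<lambda>y. EE (\<lambda>n xs. calE \<nu>1 \<nu>2 n xs 1 (\<lambda>_. y)) * f y"])
      show "(\<lambda>ys. EE (\<lambda>n xs. calE \<nu>1 \<nu>2 n xs 1 ys) * f (ys 0)) \<in> borel_measurable (S.P 1)"
        unfolding EEc by (intro borel_measurable_times borel_measurable_divide PEm1 borel_measurable_const measurable_compose[OF cm fm]) simp
      show "EE (\<lambda>n xs. calE \<nu>1 \<nu>2 n xs 1 ys) * f (ys 0) = EE (\<lambda>n xs. calE \<nu>1 \<nu>2 n xs 1 (\<lambda>_. ys 0)) * f (ys 0)" for ys
        using ce1[of ys] by simp
    qed
  qed
  have lenm: "len \<in> borel_measurable lam" using S.len_m[OF measurable_ident_sets[OF refl]] by simp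

  have c1: "EE Lc = (\<integral>y. EE (\<lambda>n xs. calE \<nu>1 \<nu>2 n xs 1 (\<lambda>_. y)) * len y \<partial>lam)"
  proof -
    have "EE Lc = poisson_expect lam (\<lambda>n xs. (\<Sum>\<sigma>\<in>Inj 1 n. len (xs (\<sigma> 0))) * Gexp \<nu>1 \<nu>2 n xs) / PG"
      by (simp only: EEf PG_def cLc)
    also have "\<dots> = (\<integral>ys. len (ys 0) * PE 1 ys \<partial>S.P 1) / PG"
      by (simp only: g1.main PE_def)
    also have "\<dots> = (\<integral>ys. EE (\<lambda>n xs. calE \<nu>1 \<nu>2 n xs 1 ys) * len (ys 0) \<partial>S.P 1)" by (rule DC)
    also have "\<dots> = (\<integral>y. EE (\<lambda>n xs. calE \<nu>1 \<nu>2 n xs 1 (\<lambda>_. y)) * len y \<partial>lam)" by (rule P1c[OF lenm])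
    finally show ?thesis .
  qed

  have c2: "EE Nc = 1/2 * (\<integral>ys. EE (\<lambda>n xs. calE \<nu>1 \<nu>2 n xs 2 ys) * ind (ys 0) (ys 1) \<partial>lamn 2)"
  proof -
    have "EE Nc = poisson_expect lam (\<lambda>n xs. (\<Sum>\<sigma>\<in>Inj 2 n. 1/2 * ind (xs (\<sigma> 0)) (xs (\<sigma> 1))) * Gexp \<nu>1 \<nu>2 n xs) / PG"
      by (simp only: EEf PG_def cNc)
    also have "\<dots> = (\<integral>ys. 1/2 * ind (ys 0) (ys 1) * PE 2 ys \<partial>S.P 2) / PG"
      by (simp only: g2N.main PE_def)
    also have "\<dots> = (\<integral>ys. EE (\<lambda>n xs. calE \<nu>1 \<nu>2 n xs 2 ys) * (1/2 * ind (ys 0) (ys 1)) \<partial>S.P 2)" by (rule DC)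
    also have "\<dots> = (\<integral>ys. 1/2 * (EE (\<lambda>n xs. calE \<nu>1 \<nu>2 n xs 2 ys) * ind (ys 0) (ys 1)) \<partial>S.P 2)"
      by (rule icong) simp
    also have "\<dots> = 1/2 * (\<integral>ys. EE (\<lambda>n xs. calE \<nu>1 \<nu>2 n xs 2 ys) * ind (ys 0) (ys 1) \<partial>lamn 2)"
      unfolding lamn by (rule integral_mult_right_zero)
    finally show ?thesis .
  qed

  have c3: "EE (\<lambda>n xs. (Lc n xs)\<^sup>2) = (\<integral>y. EE (\<lambda>n xs. calE \<nu>1 \<nu>2 n xs 1 (\<lambda>_. y)) * (len y)\<^sup>2 \<partial>lam)
       + (\<integral>ys. EE (\<lambda>n xs. calE \<nu>1 \<nu>2 n xs 2 ys) * len (ys 0) * len (ys 1) \<partial>lamn 2)"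
  proof -
    have fe: "(\<lambda>n xs. (Lc n xs)\<^sup>2 * Gexp \<nu>1 \<nu>2 n xs) = (\<lambda>n xs. (\<Sum>\<sigma>\<in>Inj 1 n. (len (xs (\<sigma> 0)))\<^sup>2) * Gexp \<nu>1 \<nu>2 n xs
       + (\<Sum>\<sigma>\<in>Inj 2 n. len (xs (\<sigma> 0)) * len (xs (\<sigma> 1))) * Gexp \<nu>1 \<nu>2 n xs)"
      by (intro ext) (simp only: cL2 distrib_right)
    have "EE (\<lambda>n xs. (Lc n xs)\<^sup>2) = poisson_expect lam (\<lambda>n xs. (\<Sum>\<sigma>\<in>Inj 1 n. (len (xs (\<sigma> 0)))\<^sup>2) * Gexp \<nu>1 \<nu>2 n xs
       + (\<Sum>\<sigma>\<in>Inj 2 n. len (xs (\<sigma> 0)) * len (xs (\<sigma> 1))) * Gexp \<nu>1 \<nu>2 n xs) / PG"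
      unfolding EEf PG_def fe ..
    also have "\<dots> = (poisson_expect lam (\<lambda>n xs. (\<Sum>\<sigma>\<in>Inj 1 n. (len (xs (\<sigma> 0)))\<^sup>2) * Gexp \<nu>1 \<nu>2 n xs)
       + poisson_expect lam (\<lambda>n xs. (\<Sum>\<sigma>\<in>Inj 2 n. len (xs (\<sigma> 0)) * len (xs (\<sigma> 1))) * Gexp \<nu>1 \<nu>2 n xs)) / PG"
      by (simp only: S.PE_add[OF g1s.term_int g2L.term_int g1s.main_summable g2L.main_summable])
    also have "\<dots> = ((\<integral>ys. (len (ys 0))\<^sup>2 * PE 1 ys \<partial>S.P 1) + (\<integral>ys. len (ys 0) * len (ys 1) * PE 2 ys \<partial>S.P 2)) / PG"
      by (simp only: g1s.main g2L.main PE_def)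
    also have "\<dots> = (\<integral>ys. (len (ys 0))\<^sup>2 * PE 1 ys \<partial>S.P 1) / PG + (\<integral>ys. len (ys 0) * len (ys 1) * PE 2 ys \<partial>S.P 2) / PG"
      by (rule add_divide_distrib)
    also have "\<dots> = (\<integral>ys. EE (\<lambda>n xs. calE \<nu>1 \<nu>2 n xs 1 ys) * (len (ys 0))\<^sup>2 \<partial>S.P 1)
       + (\<integral>ys. EE (\<lambda>n xs. calE \<nu>1 \<nu>2 n xs 2 ys) * (len (ys 0) * len (ys 1)) \<partial>S.P 2)"
      by (simp only: DC)
    also have "(\<integral>ys. EE (\<lambda>n xs. calE \<nu>1 \<nu>2 n xs 1 ys) * (len (ys 0))\<^sup>2 \<partial>S.P 1)
        = (\<integral>y. EE (\<lambda>n xs. calE \<nu>1 \<nu>2 n xs 1 (\<lambda>_. y)) * (len y)\<^sup>2 \<partial>lam)"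
      by (rule P1c) (intro borel_measurable_power lenm)
    also have "(\<integral>ys. EE (\<lambda>n xs. calE \<nu>1 \<nu>2 n xs 2 ys) * (len (ys 0) * len (ys 1)) \<partial>S.P 2)
        = (\<integral>ys. EE (\<lambda>n xs. calE \<nu>1 \<nu>2 n xs 2 ys) * len (ys 0) * len (ys 1) \<partial>lamn 2)"
      unfolding lamn by (rule icong) (simp only: mult.assoc)
    finally show ?thesis .
  qed

  have c4: "EE (\<lambda>n xs. (Nc n xs)\<^sup>2) =
       1/2 * (\<integral>ys. EE (\<lambda>n xs. calE \<nu>1 \<nu>2 n xs 2 ys) * ind (ys 0) (ys 1) \<partial>lamn 2)
     + (\<integral>ys. EE (\<lambda>n xs. calE \<nu>1 \<nu>2 n xs 3 ys) * ind (ys 0) (ys 1) * ind (ys 2) (ys 0) \<partial>lamn 3)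
     + 1/4 * (\<integral>ys. EE (\<lambda>n xs. calE \<nu>1 \<nu>2 n xs 4 ys) * ind (ys 0) (ys 1) * ind (ys 2) (ys 3) \<partial>lamn 4)"
  proof -
    have fe: "(\<lambda>n xs. (Nc n xs)\<^sup>2 * Gexp \<nu>1 \<nu>2 n xs) = (\<lambda>n xs.
         (\<Sum>\<sigma>\<in>Inj 2 n. 1/2 * ind (xs (\<sigma> 0)) (xs (\<sigma> 1))) * Gexp \<nu>1 \<nu>2 n xs
       + (\<Sum>\<sigma>\<in>Inj 3 n. ind (xs (\<sigma> 0)) (xs (\<sigma> 1)) * ind (xs (\<sigma> 2)) (xs (\<sigma> 0))) * Gexp \<nu>1 \<nu>2 n xs
       + (\<Sum>\<sigma>\<in>Inj 4 n. 1/4 * (ind (xs (\<sigma> 0)) (xs (\<sigma> 1)) * ind (xs (\<sigma> 2)) (xs (\<sigma> 3)))) * Gexp \<nu>1 \<nu>2 n xs)"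
      by (intro ext) (simp only: cN2 distrib_right)
    have "EE (\<lambda>n xs. (Nc n xs)\<^sup>2) = poisson_expect lam (\<lambda>n xs.
         (\<Sum>\<sigma>\<in>Inj 2 n. 1/2 * ind (xs (\<sigma> 0)) (xs (\<sigma> 1))) * Gexp \<nu>1 \<nu>2 n xs
       + (\<Sum>\<sigma>\<in>Inj 3 n. ind (xs (\<sigma> 0)) (xs (\<sigma> 1)) * ind (xs (\<sigma> 2)) (xs (\<sigma> 0))) * Gexp \<nu>1 \<nu>2 n xs
       + (\<Sum>\<sigma>\<in>Inj 4 n. 1/4 * (ind (xs (\<sigma> 0)) (xs (\<sigma> 1)) * ind (xs (\<sigma> 2)) (xs (\<sigma> 3)))) * Gexp \<nu>1 \<nu>2 n xs) / PG"
      unfolding EEf PG_def fe ..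
    also have "\<dots> = (poisson_expect lam (\<lambda>n xs. (\<Sum>\<sigma>\<in>Inj 2 n. 1/2 * ind (xs (\<sigma> 0)) (xs (\<sigma> 1))) * Gexp \<nu>1 \<nu>2 n xs)
       + poisson_expect lam (\<lambda>n xs. (\<Sum>\<sigma>\<in>Inj 3 n. ind (xs (\<sigma> 0)) (xs (\<sigma> 1)) * ind (xs (\<sigma> 2)) (xs (\<sigma> 0))) * Gexp \<nu>1 \<nu>2 n xs)
       + poisson_expect lam (\<lambda>n xs. (\<Sum>\<sigma>\<in>Inj 4 n. 1/4 * (ind (xs (\<sigma> 0)) (xs (\<sigma> 1)) * ind (xs (\<sigma> 2)) (xs (\<sigma> 3)))) * Gexp \<nu>1 \<nu>2 n xs)) / PG"
      by (simp only: S.PE_add3[OF g2N.term_int g3.term_int g4.term_int g2N.main_summable g3.main_summable g4.main_summable])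
    also have "\<dots> = ((\<integral>ys. 1/2 * ind (ys 0) (ys 1) * PE 2 ys \<partial>S.P 2)
       + (\<integral>ys. ind (ys 0) (ys 1) * ind (ys 2) (ys 0) * PE 3 ys \<partial>S.P 3)
       + (\<integral>ys. 1/4 * (ind (ys 0) (ys 1) * ind (ys 2) (ys 3)) * PE 4 ys \<partial>S.P 4)) / PG"
      by (simp only: g2N.main g3.main g4.main PE_def)
    also have "\<dots> = (\<integral>ys. 1/2 * ind (ys 0) (ys 1) * PE 2 ys \<partial>S.P 2) / PG
       + (\<integral>ys. ind (ys 0) (ys 1) * ind (ys 2) (ys 0) * PE 3 ys \<partial>S.P 3) / PG
       + (\<integral>ys. 1/4 * (ind (ys 0) (ys 1) * ind (ys 2) (ys 3)) * PE 4 ys \<partial>S.P 4) / PG"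
      by (simp only: add_divide_distrib)
    also have "\<dots> = (\<integral>ys. EE (\<lambda>n xs. calE \<nu>1 \<nu>2 n xs 2 ys) * (1/2 * ind (ys 0) (ys 1)) \<partial>S.P 2)
       + (\<integral>ys. EE (\<lambda>n xs. calE \<nu>1 \<nu>2 n xs 3 ys) * (ind (ys 0) (ys 1) * ind (ys 2) (ys 0)) \<partial>S.P 3)
       + (\<integral>ys. EE (\<lambda>n xs. calE \<nu>1 \<nu>2 n xs 4 ys) * (1/4 * (ind (ys 0) (ys 1) * ind (ys 2) (ys 3))) \<partial>S.P 4)"
      by (simp only: DC)
    also have "(\<integral>ys. EE (\<lambda>n xs. calE \<nu>1 \<nu>2 n xs 2 ys) * (1/2 * ind (ys 0) (ys 1)) \<partial>S.P 2)
       = 1/2 * (\<integral>ys. EE (\<lambda>n xs. calE \<nu>1 \<nu>2 n xs 2 ys) * ind (ys 0) (ys 1) \<partial>lamn 2)"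
    proof -
      have "(\<integral>ys. EE (\<lambda>n xs. calE \<nu>1 \<nu>2 n xs 2 ys) * (1/2 * ind (ys 0) (ys 1)) \<partial>S.P 2)
        = (\<integral>ys. 1/2 * (EE (\<lambda>n xs. calE \<nu>1 \<nu>2 n xs 2 ys) * ind (ys 0) (ys 1)) \<partial>S.P 2)" by (rule icong) simp
      then show ?thesis unfolding lamn by simp
    qed
    also have "(\<integral>ys. EE (\<lambda>n xs. calE \<nu>1 \<nu>2 n xs 3 ys) * (ind (ys 0) (ys 1) * ind (ys 2) (ys 0)) \<partial>S.P 3)
       = (\<integral>ys. EE (\<lambda>n xs. calE \<nu>1 \<nu>2 n xs 3 ys) * ind (ys 0) (ys 1) * ind (ys 2) (ys 0) \<partial>lamn 3)"
      unfolding lamn by (rule icong) (simp only: mult.assoc)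
    also have "(\<integral>ys. EE (\<lambda>n xs. calE \<nu>1 \<nu>2 n xs 4 ys) * (1/4 * (ind (ys 0) (ys 1) * ind (ys 2) (ys 3))) \<partial>S.P 4)
       = 1/4 * (\<integral>ys. EE (\<lambda>n xs. calE \<nu>1 \<nu>2 n xs 4 ys) * ind (ys 0) (ys 1) * ind (ys 2) (ys 3) \<partial>lamn 4)"
    proof -
      have "(\<integral>ys. EE (\<lambda>n xs. calE \<nu>1 \<nu>2 n xs 4 ys) * (1/4 * (ind (ys 0) (ys 1) * ind (ys 2) (ys 3))) \<partial>S.P 4)
        = (\<integral>ys. 1/4 * (EE (\<lambda>n xs. calE \<nu>1 \<nu>2 n xs 4 ys) * ind (ys 0) (ys 1) * ind (ys 2) (ys 3)) \<partial>S.P 4)" by (rule icong) simp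
      then show ?thesis unfolding lamn by simp
    qed
    finally show ?thesis .
  qed

  show ?thesis using c1 c2 c3 c4 by blast
qed

end
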